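(* Let $G=G_1\,\Box\,\cdots\,\Box\,G_D$ be a cartesian product of cycle digraphs $C_{n}$ ($n\ge3$) and simple directed paths $P_n$ ($n\ge2$). Let $c_{\mathrm{even}}$ be the number of factors that are cycle digraphs with an even number of vertices. Then $$\frac{\dim\ker\mathcal D(G)}{r}=\begin{cases}2^{c_{\mathrm{even}}}&\text{if no factor is a simple directed path with an even number of vertices},\\ 0&\text{otherwise.}\end{cases}$$ In particular, if no factor is a path with an even number of vertices, then $\dim\ker\mathcal D(G)\ge r$.
   Context: The cycle digraph $C_n$ has vertex set $\{1,\dots,n\}$ and edges $i\to i+1$ for $1\le i\le n-1$ together with $n\to1$. The simple directed path $P_n$ has vertex set $\{1,\dots,n\}$ and edges $i\to i+1$ for $1\le i\le n-1$. For a directed graph without multiple edges, the anti-symmetrized adjacency matrix $A_{\mathrm{as}}$ is the $|V|\times|V|$ matrix with: - $(A_{\mathrm{as}})_{ij}=1$ if an edge leaves $i$ and enters $j$; - $(A_{\mathrm{as}})_{ij}=-1$ if an edge leaves $j$ and enters $i$; - $(A_{\mathrm{as}})_{ij}=0$ otherwise. Let $\gamma_1,\dots,\gamma_D$ be complex $r\times r$ matrices satisfying $\gamma_\mu\gamma_\nu+\gamma_\nu\gamma_\mu=2\delta_{\mu\nu}\mathbf 1_r$. For $G_\mu$ with $n_\mu$ vertices, define $$\mathcal D(G)=\sum_{\mu=1}^D\Big(\mathbf 1_{n_D}\otimes\cdots\otimes\mathbf 1_{n_{\mu+1}}\otimes A_{\mathrm{as}}(G_\mu)\otimes\mathbf 1_{n_{\mu-1}}\otimes\cdots\otimes\mathbf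 1_{n_1}\Big)\otimes\gamma_\mu,$$ where $\otimes$ is the Kronecker product and $\mathbf 1_k$ is the $k\times k$ identity. *)

theory Defs
  imports "Jordan_Normal_Form.Matrix_Kernel" Complex_Main
begin

definition kron :: "'a::times mat \<Rightarrow> 'a mat \<Rightarrow> 'a mat" where
  "kron A B = mat (dim_row A * dim_row B) (dim_col A * dim_col B)
     (\<lambda>(i, j). A $$ (i div dim_row B, j div dim_col B) * B $$ (i mod dim_row B, j mod dim_col B))"

(* The factor digraphs: cycle digraph C_n and simple directed path P_n.
   Vertices 1..n of the paper are represented as 0..n-1 (vertex k+1 is index k). *)
datatype factor = Cycle nat | Path nat

fun nverts :: "factor \<Rightarrow> nat" where
  "nverts (Cycle n) = n"
| "nverts (Path n) = n"

fun edge :: "factor \<Rightarrow> nat \<Rightarrow> nat \<Rightarrow> bool" where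
  "edge (Cycle n) i j = (i < n \<and> j < n \<and> (j = i + 1 \<or> (i = n - 1 \<and> j = 0)))"
| "edge (Path n) i j = (i < n \<and> j < n \<and> j = i + 1)"

fun valid_factor :: "factor \<Rightarrow> bool" where
  "valid_factor (Cycle n) = (n \<ge> 3)"
| "valid_factor (Path n) = (n \<ge> 2)"

definition A_as :: "factor \<Rightarrow> complex mat" where
  "A_as G = mat (nverts G) (nverts G)
     (\<lambda>(i, j). if edge G i j then 1 else if edge G j i then -1 else 0)"

(* term mu (0-indexed, mu < D) of D(G): 1_{n_D} (x) ... (x) A_as(G_mu) (x) ... (x) 1_{n_1} (x) gamma_mu,
   where Gs ! k is the factor G_{k+1} and gam k is gamma_{k+1}. *)
definition dirac_term :: "factor list \<Rightarrow> (nat \<Rightarrow> complex mat) \<Rightarrow> nat \<Rightarrow> complex mat" where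
  "dirac_term Gs gam mu =
     kron (foldr kron (rev (map (\<lambda>nu. if nu = mu then A_as (Gs ! nu) else 1\<^sub>m (nverts (Gs ! nu)))
                              [0..<length Gs])) (1\<^sub>m 1))
          (gam mu)"

definition dirac :: "factor list \<Rightarrow> (nat \<Rightarrow> complex mat) \<Rightarrow> nat \<Rightarrow> complex mat" where
  "dirac Gs gam r =
     foldr (+) (map (dirac_term Gs gam) [0..<length Gs])
       (0\<^sub>m ((\<Prod>G\<leftarrow>Gs. nverts G) * r) ((\<Prod>G\<leftarrow>Gs. nverts G) * r))"

definition c_even :: "factor list \<Rightarrow> nat" where
  "c_even Gs = length (filter (\<lambda>G. \<exists>n. G = Cycle n \<and> even n) Gs)"

definition has_even_path :: "factor list \<Rightarrow> bool" where
  "has_even_path Gs = (\<exists>n. Path n \<in> set Gs \<and> even n)"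

end

theory Submission
  imports Defs
begin

lemma dim_kron[simp]: "dim_row (kron A B) = dim_row A * dim_row B" "dim_col (kron A B) = dim_col A * dim_col B"
  by (auto simp: kron_def)

lemma index_kron[simp]: "i < dim_row A * dim_row B \<Longrightarrow> j < dim_col A * dim_col B \<Longrightarrow>
  kron A B $$ (i,j) = A $$ (i div dim_row B, j div dim_col B) * B $$ (i mod dim_row B, j mod dim_col B)"
  by (auto simp: kron_def)

lemma kron_carrier[simp,intro]: "A \<in> carrier_mat ra ca \<Longrightarrow> B \<in> carrier_mat rb cb \<Longrightarrow> kron A B \<in> carrier_mat (ra*rb) (ca*cb)"
  unfolding carrier_mat_def by simp

lemma sum_split_mult: "(\<Sum>k<(a::nat)*b. f k) = (\<Sum>k1<a. \<Sum>k2<b. f (k1*b+k2))"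
proof -
  have "(\<Sum>k<a*b. f k) = (\<Sum>(k1,k2)\<in>{..<a}\<times>{..<b}. f (k1*b+k2))"
  proof (rule sum.reindex_bij_witness[where j="\<lambda>k. (k div b, k mod b)" and i="\<lambda>(k1,k2). k1*b+k2"])
    fix k assume k: "k \<in> {..<a*b}"
    then have b: "b > 0" by (cases b) auto
    show "(case (k div b, k mod b) of (k1, k2) \<Rightarrow> k1 * b + k2) = k" by simp
    show "(k div b, k mod b) \<in> {..<a} \<times> {..<b}" using k b
      by (auto simp: less_mult_imp_div_less)
    show "(case (k div b, k mod b) of (k1, k2) \<Rightarrow> f (k1 * b + k2)) = f k" by simp
  next
    fix p assume p: "p \<in> {..<a} \<times> {..<b}"
    obtain k1 k2 where pk: "p = (k1,k2)" by force
    with p have k: "k1 < a" "k2 < b" by auto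
    have "k1*b+k2 < a*b"
    proof -
      have "k1*b+k2 < k1*b+b" using k by simp
      also have "\<dots> = (k1+1)*b" by simp
      also have "\<dots> \<le> a*b" using k by (intro mult_right_mono) auto
      finally show ?thesis .
    qed
    then show "(case p of (k1, k2) \<Rightarrow> k1 * b + k2) \<in> {..<a * b}" using pk by simp
    show "((case p of (k1, k2) \<Rightarrow> k1 * b + k2) div b, (case p of (k1, k2) \<Rightarrow> k1 * b + k2) mod b) = p"
      using pk k by auto
  qed
  also have "\<dots> = (\<Sum>k1<a. \<Sum>k2<b. f (k1*b+k2))" by (rule sum.cartesian_product[symmetric])
  finally show ?thesis .
qed

lemma idx_bound: "(k1::nat) < a \<Longrightarrow> k2 < b \<Longrightarrow> k1*b+k2 < a*b"
proof -
  assume k: "k1 < a" "k2 < b"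
  have "k1*b+k2 < k1*b+b" using k by simp
  also have "\<dots> = (k1+1)*b" by simp
  also have "\<dots> \<le> a*b" using k by (intro mult_right_mono) auto
  finally show ?thesis .
qed

lemma kron_mult:
  fixes A :: "'a::comm_semiring_0 mat"
  assumes A: "A \<in> carrier_mat a1 a2" and B: "B \<in> carrier_mat b1 b2"
    and C: "C \<in> carrier_mat a2 a3" and E: "E \<in> carrier_mat b2 b3"
  shows "kron A B * kron C E = kron (A*C) (B*E)"
proof (rule eq_matI)
  fix i j assume i: "i < dim_row (kron (A*C) (B*E))" and j: "j < dim_col (kron (A*C) (B*E))"
  from i j A B C E have i': "i < a1*b1" and j': "j < a3*b3" by auto
  have "0 < a1*b1" "0 < a3*b3" using i' j' by linarith+
  then have b1: "b1 > 0" and b3: "b3 > 0" by simp_all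
  have "(kron A B * kron C E) $$ (i,j) = (\<Sum>k<a2*b2. kron A B $$ (i,k) * kron C E $$ (k,j))"
    using A B C E i' j' by (simp add: scalar_prod_def times_mat_def atLeast0LessThan)
  also have "\<dots> = (\<Sum>k1<a2. \<Sum>k2<b2. kron A B $$ (i,k1*b2+k2) * kron C E $$ (k1*b2+k2,j))"
    by (rule sum_split_mult)
  also have "\<dots> = (\<Sum>k1<a2. \<Sum>k2<b2. (A $$ (i div b1, k1) * C $$ (k1, j div b3)) * (B $$ (i mod b1, k2) * E $$ (k2, j mod b3)))"
    using A B C E i' j' idx_bound by (intro sum.cong refl) (auto simp: mult_ac)
  also have "\<dots> = (\<Sum>k1<a2. A $$ (i div b1, k1) * C $$ (k1, j div b3)) * (\<Sum>k2<b2. B $$ (i mod b1, k2) * E $$ (k2, j mod b3))"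
    by (simp add: sum_product)
  also have "\<dots> = kron (A*C) (B*E) $$ (i,j)"
    using A B C E i' j' b1 b3
    by (simp add: scalar_prod_def times_mat_def atLeast0LessThan less_mult_imp_div_less)
  finally show "(kron A B * kron C E) $$ (i,j) = kron (A*C) (B*E) $$ (i,j)" .
qed (use A B C E in auto)

lemma mod_mult_div: "(i::nat) mod (b*c) div c = i div c mod b"
  by (cases "c = 0") (simp_all add: mult.commute[of b c] mod_mult2_eq)
lemma mod_mult_mod: "(i::nat) mod (b*c) mod c = i mod c"
  by (simp add: mod_mod_cancel)
lemma div_mult_div: "(i::nat) div (b*c) = i div c div b"
  by (metis div_mult2_eq mult.commute)

lemma kron_assoc:
  fixes A :: "'a::semigroup_mult mat"
  assumes A: "A \<in> carrier_mat a1 a2" and B: "B \<in> carrier_mat b1 b2" and C: "C \<in> carrier_mat c1 c2"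
  shows "kron (kron A B) C = kron A (kron B C)"
proof (rule eq_matI)
  fix i j assume i: "i < dim_row (kron A (kron B C))" and j: "j < dim_col (kron A (kron B C))"
  from i j A B C have i': "i < a1*(b1*c1)" and j': "j < a2*(b2*c2)" by auto
  have "0 < a1*(b1*c1)" "0 < a2*(b2*c2)" using i' j' by linarith+
  then have pos: "b1 > 0" "c1 > 0" "b2 > 0" "c2 > 0" by simp_all
  have i1: "i div c1 < a1*b1" using i' pos by (simp add: less_mult_imp_div_less mult.assoc)
  have j1: "j div c2 < a2*b2" using j' pos by (simp add: less_mult_imp_div_less mult.assoc)
  have e1: "kron (kron A B) C $$ (i,j) = kron A B $$ (i div c1, j div c2) * C $$ (i mod c1, j mod c2)"
    using A B C i' j' by (subst index_kron) (auto simp: mult.assoc)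
  have e2: "kron A B $$ (i div c1, j div c2) = A $$ (i div c1 div b1, j div c2 div b2) * B $$ (i div c1 mod b1, j div c2 mod b2)"
    using A B i1 j1 by (subst index_kron) auto
  have e3: "kron A (kron B C) $$ (i,j) = A $$ (i div (b1*c1), j div (b2*c2)) * kron B C $$ (i mod (b1*c1), j mod (b2*c2))"
    using A B C i' j' by (subst index_kron) auto
  have e4: "kron B C $$ (i mod (b1*c1), j mod (b2*c2)) = B $$ (i mod (b1*c1) div c1, j mod (b2*c2) div c2) * C $$ (i mod (b1*c1) mod c1, j mod (b2*c2) mod c2)"
    using B C pos by (subst index_kron) auto
  show "kron (kron A B) C $$ (i,j) = kron A (kron B C) $$ (i,j)"
    unfolding e1 e2 e3 e4 by (simp add: mod_mult_div mod_mult_mod div_mult_div mult.assoc)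
qed (use A B C in \<open>auto simp: mult.assoc\<close>)


lemma kron_one_one: "kron (1\<^sub>m a) (1\<^sub>m b) = (1\<^sub>m (a*b) :: 'a::semiring_1 mat)"
proof (rule eq_matI)
  fix i j assume i: "i < dim_row (1\<^sub>m (a*b) :: 'a mat)" and j: "j < dim_col (1\<^sub>m (a*b) :: 'a mat)"
  then have i': "i < a*b" and j': "j < a*b" by auto
  have "0 < a*b" using i' by linarith
  then have b: "b > 0" by simp
  have da: "i div b < a" "j div b < a" using i' j' by (auto simp: less_mult_imp_div_less)
  have eq: "(i div b = j div b \<and> i mod b = j mod b) = (i = j)"
    by (metis div_mult_mod_eq)
  show "kron (1\<^sub>m a) (1\<^sub>m b) $$ (i, j) = (1\<^sub>m (a*b) :: 'a mat) $$ (i, j)"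
    using i' j' da b eq by (auto simp: one_mat_def)
qed auto

lemma kron_one_right: "A \<in> carrier_mat a c \<Longrightarrow> kron A (1\<^sub>m 1) = (A :: 'a::semiring_1 mat)"
  by (rule eq_matI) auto

lemma kron_one_left: "A \<in> carrier_mat a c \<Longrightarrow> kron (1\<^sub>m 1) A = (A :: 'a::semiring_1 mat)"
  by (rule eq_matI) auto

lemma kron_add_right: "B \<in> carrier_mat b c \<Longrightarrow> C \<in> carrier_mat b c \<Longrightarrow>
   kron A (B + C) = kron A B + kron (A :: 'a::semiring mat) C"
proof (rule eq_matI)
  fix i j assume B: "B \<in> carrier_mat b c" and C: "C \<in> carrier_mat b c" and i: "i < dim_row (kron A B + kron A C)" and j: "j < dim_col (kron A B + kron A C)"
  have i': "i < dim_row A * b" "j < dim_col A * c" using i j B C by auto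
  have "0 < dim_row A * b" "0 < dim_col A * c" using i' by linarith+
  then show "kron A (B + C) $$ (i, j) = (kron A B + kron A C) $$ (i, j)"
    using i' B C by (auto simp: distrib_left)
qed auto

lemma kron_smult_right: "kron A (k \<cdot>\<^sub>m B) = k \<cdot>\<^sub>m kron (A :: 'a::comm_semiring_0 mat) B"
proof (rule eq_matI)
  fix i j assume "i < dim_row (k \<cdot>\<^sub>m kron A B)" "j < dim_col (k \<cdot>\<^sub>m kron A B)"
  then show "kron A (k \<cdot>\<^sub>m B) $$ (i, j) = (k \<cdot>\<^sub>m kron A B) $$ (i, j)"
    by (cases "dim_row B = 0"; cases "dim_col B = 0") (auto simp: less_mult_imp_div_less mult_ac)
qed auto

lemma kron_zero_right: "kron A (0\<^sub>m b c) = (0\<^sub>m (dim_row A * b) (dim_col A * c) :: 'a::semiring_0 mat)"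
proof (rule eq_matI)
  fix i j assume i: "i < dim_row (0\<^sub>m (dim_row A * b) (dim_col A * c) :: 'a mat)" and j: "j < dim_col (0\<^sub>m (dim_row A * b) (dim_col A * c) :: 'a mat)"
  have i': "i < dim_row A * b" "j < dim_col A * c" using i j by auto
  have "0 < dim_row A * b" "0 < dim_col A * c" using i' by linarith+
  then show "kron A (0\<^sub>m b c) $$ (i, j) = (0\<^sub>m (dim_row A * b) (dim_col A * c) :: 'a mat) $$ (i, j)"
    using i' by auto
qed auto

abbreviation Fk :: "'a::semiring_1 mat list \<Rightarrow> 'a mat" where "Fk xs \<equiv> foldr kron xs (1\<^sub>m 1)"

lemma F_carrier: "(\<And>y. y \<in> set ys \<Longrightarrow> f y \<in> carrier_mat (n y) (n y)) \<Longrightarrow>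
  Fk (map f ys) \<in> carrier_mat (prod_list (map n ys)) (prod_list (map n ys))"
  by (induction ys) auto

lemma F_mult: "(\<And>y. y \<in> set ys \<Longrightarrow> f y \<in> carrier_mat (n y) (n y)) \<Longrightarrow>
  (\<And>y. y \<in> set ys \<Longrightarrow> g y \<in> carrier_mat (n y) (n y)) \<Longrightarrow>
  Fk (map f ys) * Fk (map g ys) = Fk (map (\<lambda>y. f y * g y) (ys :: 'b list) :: 'a::comm_semiring_1 mat list)"
proof (induction ys)
  case Nil then show ?case by simp
next
  case (Cons y ys)
  have c1: "Fk (map f ys) \<in> carrier_mat (prod_list (map n ys)) (prod_list (map n ys))"
    using Cons.prems by (intro F_carrier) auto
  have c2: "Fk (map g ys) \<in> carrier_mat (prod_list (map n ys)) (prod_list (map n ys))"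
    using Cons.prems by (intro F_carrier) auto
  have "Fk (map f (y#ys)) * Fk (map g (y#ys)) = kron (f y * g y) (Fk (map f ys) * Fk (map g ys))"
    using Cons.prems c1 c2 by (simp add: kron_mult[of _ "n y" "n y" _ _ _ _ "n y"])
  then show ?case using Cons by simp
qed

lemma F_one: "Fk (map (\<lambda>y. 1\<^sub>m (n y)) ys) = (1\<^sub>m (prod_list (map n ys)) :: 'a::semiring_1 mat)"
  by (induction ys) (auto simp: kron_one_one)

lemma F_append: "(\<And>y. y \<in> set (xs@ys) \<Longrightarrow> f y \<in> carrier_mat (n y) (n y)) \<Longrightarrow>
  Fk (map f (xs@ys)) = kron (Fk (map f xs)) (Fk (map f ys) :: 'a::semiring_1 mat)"
proof (induction xs)
  case Nil
  have cc: "Fk (map f ys) \<in> carrier_mat (prod_list (map n ys)) (prod_list (map n ys))"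
    using Nil by (intro F_carrier) auto
  show ?case using kron_one_left[OF cc] by simp
next
  case (Cons x xs)
  have c1: "Fk (map f xs) \<in> carrier_mat (prod_list (map n xs)) (prod_list (map n xs))"
    using Cons.prems by (intro F_carrier) auto
  have c2: "Fk (map f ys) \<in> carrier_mat (prod_list (map n ys)) (prod_list (map n ys))"
    using Cons.prems by (intro F_carrier) auto
  have fx: "f x \<in> carrier_mat (n x) (n x)" using Cons.prems by auto
  have IH: "Fk (map f (xs@ys)) = kron (Fk (map f xs)) (Fk (map f ys))" using Cons by auto
  have "Fk (map f ((x#xs)@ys)) = kron (f x) (Fk (map f (xs@ys)))"
    by (simp only: append_Cons list.map foldr_Cons o_apply)
  also have "\<dots> = kron (kron (f x) (Fk (map f xs))) (Fk (map f ys))"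
    unfolding IH using kron_assoc[OF fx c1 c2] by simp
  also have "\<dots> = kron (Fk (map f (x#xs))) (Fk (map f ys))"
    by (simp only: list.map foldr_Cons o_apply)
  finally show ?case .
qed

definition sgnmat :: "complex \<Rightarrow> nat \<Rightarrow> complex mat \<Rightarrow> bool" where
  "sgnmat \<sigma> n M \<longleftrightarrow> M \<in> carrier_mat n n \<and>
     (\<forall>i<n. \<forall>j<n. M $$ (j,i) = \<sigma> * M $$ (i,j) \<and> cnj (M $$ (i,j)) = M $$ (i,j))"

lemma sgn_one: "sgnmat 1 n (1\<^sub>m n)"
  by (auto simp: sgnmat_def one_mat_def)

lemma kron_sgn: assumes "sgnmat \<sigma> a A" "sgnmat \<tau> b B" shows "sgnmat (\<sigma>*\<tau>) (a*b) (kron A B)"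
proof -
  have A: "A \<in> carrier_mat a a" and B: "B \<in> carrier_mat b b" using assms by (auto simp: sgnmat_def)
  { fix i j assume i: "i < a*b" and j: "j < a*b"
    have "0 < a*b" using i by linarith
    then have b: "b > 0" by simp
    have d: "i div b < a" "j div b < a" "i mod b < b" "j mod b < b" using i j b by (auto simp: less_mult_imp_div_less)
    have e1: "kron A B $$ (j,i) = A $$ (j div b, i div b) * B $$ (j mod b, i mod b)"
      using A B i j by (subst index_kron) auto
    have e2: "kron A B $$ (i,j) = A $$ (i div b, j div b) * B $$ (i mod b, j mod b)"
      using A B i j by (subst index_kron) auto
    have s1: "A $$ (j div b, i div b) = \<sigma> * A $$ (i div b, j div b)" "cnj (A $$ (i div b, j div b)) = A $$ (i div b, j div b)"
      using assms(1) d unfolding sgnmat_def by blast+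
    have s2: "B $$ (j mod b, i mod b) = \<tau> * B $$ (i mod b, j mod b)" "cnj (B $$ (i mod b, j mod b)) = B $$ (i mod b, j mod b)"
      using assms(2) d unfolding sgnmat_def by blast+
    have "kron A B $$ (j,i) = (\<sigma>*\<tau>) * kron A B $$ (i,j)"
      unfolding e1 e2 s1 s2 by (simp add: mult_ac)
    moreover have "cnj (kron A B $$ (i,j)) = kron A B $$ (i,j)"
      unfolding e2 using s1 s2 by simp
    ultimately have "kron A B $$ (j,i) = (\<sigma>*\<tau>) * kron A B $$ (i,j) \<and> cnj (kron A B $$ (i,j)) = kron A B $$ (i,j)" by blast
  } note X = this
  show ?thesis unfolding sgnmat_def using kron_carrier[OF A B] X by blast
qed

lemma F_sgn: "(\<And>y. y \<in> set ys \<Longrightarrow> sgnmat (s y) (n y) (f y)) \<Longrightarrow>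
  sgnmat (prod_list (map s ys)) (prod_list (map n ys)) (Fk (map f ys))"
proof (induction ys)
  case Nil then show ?case using sgn_one[of 1] by simp
next
  case (Cons y ys) then show ?case using kron_sgn by auto
qed


lemma A_as_carrier[simp]: "A_as G \<in> carrier_mat (nverts G) (nverts G)"
  by (simp add: A_as_def)

lemma A_as_sgn: assumes "valid_factor G" shows "sgnmat (-1) (nverts G) (A_as G)"
proof -
  have nb: "\<not> (edge G i j \<and> edge G j i)" for i j
    using assms by (cases G) auto
  show ?thesis unfolding sgnmat_def A_as_def using nb by auto
qed

definition fm :: "factor list \<Rightarrow> nat \<Rightarrow> nat \<Rightarrow> complex mat" where
  "fm Gs mu nu = (if nu = mu then A_as (Gs ! nu) else 1\<^sub>m (nverts (Gs ! nu)))"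

definition Bm :: "factor list \<Rightarrow> nat \<Rightarrow> complex mat" where
  "Bm Gs mu = Fk (map (fm Gs mu) (rev [0..<length Gs]))"

definition NN :: "factor list \<Rightarrow> nat" where
  "NN Gs = prod_list (map nverts Gs)"

lemma NN_alt: "prod_list (map (\<lambda>nu. nverts (Gs ! nu)) (rev [0..<length Gs])) = NN Gs"
proof -
  have "prod_list (map (\<lambda>nu. nverts (Gs ! nu)) (rev [0..<length Gs])) = prod_list (rev (map (\<lambda>nu. nverts (Gs ! nu)) [0..<length Gs]))"
    by (simp add: rev_map)
  also have "\<dots> = prod_list (map (\<lambda>nu. nverts (Gs ! nu)) [0..<length Gs])"
    by (simp add: prod_list.rev)
  also have "map (\<lambda>nu. nverts (Gs ! nu)) [0..<length Gs] = map nverts Gs"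
    by (rule nth_equalityI) auto
  finally show ?thesis unfolding NN_def .
qed

lemma fm_carrier: "fm Gs mu nu \<in> carrier_mat (nverts (Gs ! nu)) (nverts (Gs ! nu))"
  by (simp add: fm_def)

lemma Bm_carrier: "Bm Gs mu \<in> carrier_mat (NN Gs) (NN Gs)"
  unfolding Bm_def NN_alt[symmetric] by (rule F_carrier) (rule fm_carrier)

lemma A1: "1\<^sub>m (nverts G) * A_as G = A_as G * 1\<^sub>m (nverts G)"
  by (metis A_as_carrier left_mult_one_mat right_mult_one_mat)

lemma Bm_comm: "Bm Gs mu * Bm Gs nu = Bm Gs nu * Bm Gs mu"
proof -
  have "Bm Gs mu * Bm Gs nu = Fk (map (\<lambda>y. fm Gs mu y * fm Gs nu y) (rev [0..<length Gs]))"
    unfolding Bm_def by (rule F_mult) (rule fm_carrier)+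
  also have "map (\<lambda>y. fm Gs mu y * fm Gs nu y) (rev [0..<length Gs]) = map (\<lambda>y. fm Gs nu y * fm Gs mu y) (rev [0..<length Gs])"
    by (intro map_cong refl) (auto simp: fm_def A1)
  also have "Fk \<dots> = Bm Gs nu * Bm Gs mu"
    unfolding Bm_def by (rule F_mult[symmetric]) (rule fm_carrier)+
  finally show ?thesis .
qed

lemma Bm_sgn: assumes "\<forall>G\<in>set Gs. valid_factor G" "mu < length Gs"
  shows "sgnmat (-1) (NN Gs) (Bm Gs mu)"
proof -
  let ?s = "\<lambda>y. if y = mu then (-1::complex) else 1"
  have "sgnmat (prod_list (map ?s (rev [0..<length Gs]))) (prod_list (map (\<lambda>nu. nverts (Gs ! nu)) (rev [0..<length Gs]))) (Bm Gs mu)"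
    unfolding Bm_def
  proof (rule F_sgn)
    fix y assume "y \<in> set (rev [0..<length Gs])"
    then have "y < length Gs" by auto
    then have "valid_factor (Gs ! y)" using assms by auto
    then show "sgnmat (?s y) (nverts (Gs ! y)) (fm Gs mu y)"
      unfolding fm_def using A_as_sgn sgn_one by auto
  qed
  moreover have "prod_list (map ?s (rev [0..<length Gs])) = -1"
  proof -
    have "prod_list (map ?s (rev [0..<length Gs])) = prod_list (map ?s [0..<length Gs])"
      by (simp add: rev_map[symmetric] prod_list.rev)
    also have "\<dots> = (\<Prod>y\<in>set [0..<length Gs]. ?s y)"
      by (rule prod.distinct_set_conv_list[symmetric]) simp
    also have "\<dots> = (\<Prod>y\<in>{0..<length Gs}. ?s y)" by simp
    also have "\<dots> = -1" using assms(2) by (subst prod.delta) auto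
    finally show ?thesis .
  qed
  ultimately show ?thesis using NN_alt by simp
qed

lemma sum_list_entry: "(\<And>x. x \<in> set xs \<Longrightarrow> T x \<in> carrier_mat m m) \<Longrightarrow> i < m \<Longrightarrow> j < m \<Longrightarrow>
  foldr (+) (map T xs) (0\<^sub>m m m) \<in> carrier_mat m m \<and>
  foldr (+) (map T xs) (0\<^sub>m m m) $$ (i,j) = (\<Sum>x\<leftarrow>xs. T x $$ (i,j))"
  by (induction xs) auto

lemma sum_list_carrier: "(\<And>x. x \<in> set xs \<Longrightarrow> T x \<in> carrier_mat m m) \<Longrightarrow>
  foldr (+) (map T xs) (0\<^sub>m m m) \<in> carrier_mat m m"
  by (induction xs) auto

lemma dirac_term_alt: "dirac_term Gs gam mu = kron (Bm Gs mu) (gam mu)"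
  unfolding dirac_term_def Bm_def fm_def by (simp add: rev_map)

lemma dirac_carrier: assumes "\<forall>mu < length Gs. gam mu \<in> carrier_mat r r"
  shows "dirac Gs gam r \<in> carrier_mat (NN Gs * r) (NN Gs * r)"
  unfolding dirac_def NN_def[symmetric]
  by (rule sum_list_carrier) (use assms Bm_carrier in \<open>auto simp: dirac_term_alt\<close>)

lemma dirac_index: assumes "\<forall>mu < length Gs. gam mu \<in> carrier_mat r r" "i < NN Gs * r" "j < NN Gs * r"
  shows "dirac Gs gam r $$ (i,j) = (\<Sum>mu<length Gs. dirac_term Gs gam mu $$ (i,j))"
proof -
  have "dirac Gs gam r $$ (i,j) = (\<Sum>mu\<leftarrow>[0..<length Gs]. dirac_term Gs gam mu $$ (i,j))"
    unfolding dirac_def NN_def[symmetric]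
    using sum_list_entry[of "[0..<length Gs]" "dirac_term Gs gam" "NN Gs * r" i j] assms Bm_carrier
    by (auto simp: dirac_term_alt)
  also have "\<dots> = (\<Sum>mu<length Gs. dirac_term Gs gam mu $$ (i,j))"
    by (simp add: sum_set_upt_conv_sum_list_nat[symmetric] atLeast0LessThan)
  finally show ?thesis .
qed


lemma dsum: fixes x :: "'i \<Rightarrow> 'i \<Rightarrow> complex"
  assumes fin: "finite S" and anti: "\<And>a b. a \<in> S \<Longrightarrow> b \<in> S \<Longrightarrow> a \<noteq> b \<Longrightarrow> x a b + x b a = 0"
  shows "(\<Sum>a\<in>S. \<Sum>b\<in>S. x a b) = (\<Sum>a\<in>S. x a a)"
proof -
  have "2 * (\<Sum>a\<in>S. \<Sum>b\<in>S. x a b) = (\<Sum>a\<in>S. \<Sum>b\<in>S. x a b) + (\<Sum>a\<in>S. \<Sum>b\<in>S. x b a)"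
    using sum.swap[of "\<lambda>a b. x b a" S S] by simp
  also have "\<dots> = (\<Sum>a\<in>S. \<Sum>b\<in>S. x a b + x b a)" by (simp add: sum.distrib)
  also have "\<dots> = (\<Sum>a\<in>S. \<Sum>b\<in>S. if b = a then 2 * x a a else 0)"
    by (intro sum.cong refl) (use anti in auto)
  also have "\<dots> = (\<Sum>a\<in>S. 2 * x a a)" using fin by simp
  also have "\<dots> = 2 * (\<Sum>a\<in>S. x a a)" by (simp add: sum_distrib_left)
  finally have "2 * (\<Sum>a\<in>S. \<Sum>b\<in>S. x a b) = 2 * (\<Sum>a\<in>S. x a a)" .
  then show ?thesis by (rule mult_left_cancel[THEN iffD1, rotated]) simp
qed

lemma mat_mult_entry: "A \<in> carrier_mat n m \<Longrightarrow> B \<in> carrier_mat m p \<Longrightarrow> i < n \<Longrightarrow> j < p \<Longrightarrow>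
  (A * B) $$ (i,j) = (\<Sum>k<m. A $$ (i,k) * B $$ (k,j))"
  by (simp add: scalar_prod_def times_mat_def atLeast0LessThan)

lemma mat_vec_entry: "A \<in> carrier_mat n m \<Longrightarrow> v \<in> carrier_vec m \<Longrightarrow> i < n \<Longrightarrow>
  (A *\<^sub>v v) $ i = (\<Sum>k<m. A $$ (i,k) * v $ k)"
  by (simp add: scalar_prod_def mult_mat_vec_def atLeast0LessThan)

lemma pos_lemma:
  fixes Y :: "'i \<Rightarrow> complex mat"
  assumes fin: "finite S" and sg: "\<And>mu. mu \<in> S \<Longrightarrow> sgnmat (-1) m (Y mu)"
    and v: "v \<in> carrier_vec m"
    and z: "\<And>p. p < m \<Longrightarrow> (\<Sum>q<m. (\<Sum>mu\<in>S. (Y mu * Y mu) $$ (p,q)) * v $ q) = 0"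
    and mu: "mu \<in> S"
  shows "Y mu *\<^sub>v v = 0\<^sub>v m"
proof -
  define u where "u = (\<lambda>nu k. (Y nu *\<^sub>v v) $ k)"
  have Yc: "Y nu \<in> carrier_mat m m" if "nu \<in> S" for nu using sg[OF that] by (simp add: sgnmat_def)
  have u_def': "u nu k = (\<Sum>p<m. Y nu $$ (k,p) * v $ p)" if "nu \<in> S" "k < m" for nu k
    unfolding u_def using mat_vec_entry[OF Yc[OF that(1)] v that(2)] .
  have key: "(\<Sum>p<m. cnj (v $ p) * (\<Sum>q<m. (Y nu * Y nu) $$ (p,q) * v $ q)) = - (\<Sum>k<m. u nu k * cnj (u nu k))"
    if nu: "nu \<in> S" for nu
  proof -
    have Y: "Y nu \<in> carrier_mat m m" using Yc[OF nu] .
    have anti: "Y nu $$ (p,k) = - cnj (Y nu $$ (k,p))" if "p < m" "k < m" for p k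
    proof -
      have "Y nu $$ (p,k) = -1 * Y nu $$ (k,p)" "cnj (Y nu $$ (k,p)) = Y nu $$ (k,p)"
        using sg[OF nu] that unfolding sgnmat_def by blast+
      then show ?thesis by simp
    qed
    have "(\<Sum>p<m. cnj (v $ p) * (\<Sum>q<m. (Y nu * Y nu) $$ (p,q) * v $ q))
        = (\<Sum>p<m. cnj (v $ p) * (\<Sum>q<m. (\<Sum>k<m. Y nu $$ (p,k) * Y nu $$ (k,q)) * v $ q))"
      by (intro sum.cong refl) (simp add: mat_mult_entry[OF Y Y])
    also have "\<dots> = (\<Sum>p<m. cnj (v $ p) * (\<Sum>k<m. Y nu $$ (p,k) * u nu k))"
    proof (rule sum.cong[OF refl])
      fix p assume p: "p \<in> {..<m}"
      have "(\<Sum>q<m. (\<Sum>k<m. Y nu $$ (p,k) * Y nu $$ (k,q)) * v $ q) = (\<Sum>q<m. \<Sum>k<m. Y nu $$ (p,k) * (Y nu $$ (k,q) * v $ q))"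
        by (intro sum.cong refl) (simp add: sum_distrib_right mult.assoc)
      also have "\<dots> = (\<Sum>k<m. \<Sum>q<m. Y nu $$ (p,k) * (Y nu $$ (k,q) * v $ q))" by (rule sum.swap)
      also have "\<dots> = (\<Sum>k<m. Y nu $$ (p,k) * u nu k)"
        by (intro sum.cong refl) (simp add: u_def'[OF nu] sum_distrib_left)
      finally show "cnj (v $ p) * (\<Sum>q<m. (\<Sum>k<m. Y nu $$ (p,k) * Y nu $$ (k,q)) * v $ q) = cnj (v $ p) * (\<Sum>k<m. Y nu $$ (p,k) * u nu k)" by simp
    qed
    also have "\<dots> = (\<Sum>k<m. \<Sum>p<m. cnj (v $ p) * (Y nu $$ (p,k) * u nu k))"
      unfolding sum_distrib_left by (rule sum.swap)
    also have "\<dots> = (\<Sum>k<m. - (u nu k * cnj (\<Sum>p<m. Y nu $$ (k,p) * v $ p)))"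
    proof (intro sum.cong refl)
      fix k assume k: "k \<in> {..<m}"
      have "(\<Sum>p<m. cnj (v $ p) * (Y nu $$ (p,k) * u nu k)) = (\<Sum>p<m. - (u nu k * cnj (Y nu $$ (k,p) * v $ p)))"
      proof (rule sum.cong[OF refl])
        fix p assume p: "p \<in> {..<m}"
        have e: "Y nu $$ (p,k) = - cnj (Y nu $$ (k,p))" by (rule anti) (use p k in auto)
        show "cnj (v $ p) * (Y nu $$ (p,k) * u nu k) = - (u nu k * cnj (Y nu $$ (k,p) * v $ p))"
          unfolding e by (simp add: mult_ac)
      qed
      also have "\<dots> = - (u nu k * cnj (\<Sum>p<m. Y nu $$ (k,p) * v $ p))"
        by (simp add: sum_negf sum_distrib_left)
      finally show "(\<Sum>p<m. cnj (v $ p) * (Y nu $$ (p,k) * u nu k)) = - (u nu k * cnj (\<Sum>p<m. Y nu $$ (k,p) * v $ p))" .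
    qed
    also have "\<dots> = - (\<Sum>k<m. u nu k * cnj (u nu k))"
      by (simp add: sum_negf u_def'[OF nu])
    finally show ?thesis .
  qed
  have "0 = (\<Sum>p<m. cnj (v $ p) * (\<Sum>q<m. (\<Sum>nu\<in>S. (Y nu * Y nu) $$ (p,q)) * v $ q))"
    using z by simp
  also have "\<dots> = (\<Sum>p<m. \<Sum>nu\<in>S. cnj (v $ p) * (\<Sum>q<m. (Y nu * Y nu) $$ (p,q) * v $ q))"
  proof (rule sum.cong[OF refl])
    fix p
    have "(\<Sum>q<m. (\<Sum>nu\<in>S. (Y nu * Y nu) $$ (p,q)) * v $ q) = (\<Sum>q<m. \<Sum>nu\<in>S. (Y nu * Y nu) $$ (p,q) * v $ q)"
      by (simp add: sum_distrib_right)
    also have "\<dots> = (\<Sum>nu\<in>S. \<Sum>q<m. (Y nu * Y nu) $$ (p,q) * v $ q)" by (rule sum.swap)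
    finally show "cnj (v $ p) * (\<Sum>q<m. (\<Sum>nu\<in>S. (Y nu * Y nu) $$ (p,q)) * v $ q) = (\<Sum>nu\<in>S. cnj (v $ p) * (\<Sum>q<m. (Y nu * Y nu) $$ (p,q) * v $ q))"
      by (simp add: sum_distrib_left)
  qed
  also have "\<dots> = (\<Sum>nu\<in>S. \<Sum>p<m. cnj (v $ p) * (\<Sum>q<m. (Y nu * Y nu) $$ (p,q) * v $ q))"
    by (rule sum.swap)
  also have "\<dots> = (\<Sum>nu\<in>S. - (\<Sum>k<m. u nu k * cnj (u nu k)))"
    by (intro sum.cong refl key)
  also have "\<dots> = - (\<Sum>nu\<in>S. \<Sum>k<m. of_real ((cmod (u nu k))^2))"
    by (simp only: complex_norm_square sum_negf)
  also have "\<dots> = - of_real (\<Sum>nu\<in>S. \<Sum>k<m. (cmod (u nu k))^2)"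
    by (simp only: of_real_sum)
  finally have h0: "0 = - (of_real (\<Sum>nu\<in>S. \<Sum>k<m. (cmod (u nu k))^2) :: complex)" .
  have "(of_real (\<Sum>nu\<in>S. \<Sum>k<m. (cmod (u nu k))^2) :: complex) = 0"
    using h0 by (metis add.inverse_neutral neg_equal_iff_equal)
  then have "(\<Sum>nu\<in>S. \<Sum>k<m. (cmod (u nu k))^2) = 0"
    by (simp only: of_real_eq_0_iff)
  then have "\<forall>nu\<in>S. (\<Sum>k<m. (cmod (u nu k))^2) = 0"
    using fin by (simp add: sum_nonneg_eq_0_iff sum_nonneg)
  then have "\<forall>k<m. u mu k = 0" using mu
    by (simp add: sum_nonneg_eq_0_iff)
  then show ?thesis unfolding u_def using Yc[OF mu] v
    by (intro eq_vecI) auto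
qed


definition Ym :: "factor list \<Rightarrow> nat \<Rightarrow> nat \<Rightarrow> complex mat" where
  "Ym Gs r mu = kron (Bm Gs mu) (1\<^sub>m r)"

lemma Ym_carrier: "Ym Gs r mu \<in> carrier_mat (NN Gs * r) (NN Gs * r)"
  unfolding Ym_def using Bm_carrier by (intro kron_carrier) auto

lemma gam_sq: fixes g :: "complex mat" assumes g: "g \<in> carrier_mat r r" and h: "g * g + g * g = 2 \<cdot>\<^sub>m 1\<^sub>m r"
  shows "g * g = 1\<^sub>m r"
proof (rule eq_matI)
  fix i j assume i: "i < dim_row (1\<^sub>m r :: complex mat)" and j: "j < dim_col (1\<^sub>m r :: complex mat)"
  have "(g * g + g * g) $$ (i,j) = (2 \<cdot>\<^sub>m 1\<^sub>m r) $$ (i,j)" using h by simp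
  then have "(g*g) $$ (i,j) + (g*g) $$ (i,j) = 2 * (1\<^sub>m r :: complex mat) $$ (i,j)"
    using i j g by simp
  then show "(g * g) $$ (i,j) = (1\<^sub>m r :: complex mat) $$ (i,j)" by simp
qed (use g in auto)

lemma mult_zero_vec: "(A :: 'a::comm_ring_1 mat) \<in> carrier_mat n m \<Longrightarrow> A *\<^sub>v 0\<^sub>v m = 0\<^sub>v n"
  by (rule eq_vecI) (auto simp: scalar_prod_def)

context
  fixes Gs :: "factor list" and gam :: "nat \<Rightarrow> complex mat" and r :: nat
  assumes valid: "\<forall>G\<in>set Gs. valid_factor G"
    and gc: "\<forall>mu < length Gs. gam mu \<in> carrier_mat r r"
    and cliff: "\<forall>mu < length Gs. \<forall>nu < length Gs.
           gam mu * gam nu + gam nu * gam mu = (if mu = nu then 2 else 0) \<cdot>\<^sub>m 1\<^sub>m r"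
begin

lemma T_carrier: "mu < length Gs \<Longrightarrow> dirac_term Gs gam mu \<in> carrier_mat (NN Gs * r) (NN Gs * r)"
  unfolding dirac_term_alt using Bm_carrier gc by (intro kron_carrier) auto

lemma T_prod: "mu < length Gs \<Longrightarrow> nu < length Gs \<Longrightarrow>
  dirac_term Gs gam mu * dirac_term Gs gam nu = kron (Bm Gs mu * Bm Gs nu) (gam mu * gam nu)"
  unfolding dirac_term_alt using gc by (intro kron_mult[OF Bm_carrier _ Bm_carrier]) auto

lemma T_anti: assumes mu: "mu < length Gs" and nu: "nu < length Gs" and ne: "mu \<noteq> nu"
  and i: "i < NN Gs * r" and j: "j < NN Gs * r"
  shows "(dirac_term Gs gam mu * dirac_term Gs gam nu) $$ (i,j) + (dirac_term Gs gam nu * dirac_term Gs gam mu) $$ (i,j) = 0"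
proof -
  let ?X = "Bm Gs mu * Bm Gs nu"
  have X: "?X \<in> carrier_mat (NN Gs) (NN Gs)" using Bm_carrier by (metis mult_carrier_mat)
  have gm: "gam mu \<in> carrier_mat r r" and gn: "gam nu \<in> carrier_mat r r" using gc mu nu by auto
  have g: "gam mu * gam nu \<in> carrier_mat r r" "gam nu * gam mu \<in> carrier_mat r r"
    using mult_carrier_mat[OF gm gn] mult_carrier_mat[OF gn gm] by auto
  have "dirac_term Gs gam mu * dirac_term Gs gam nu + dirac_term Gs gam nu * dirac_term Gs gam mu
      = kron ?X (gam mu * gam nu) + kron ?X (gam nu * gam mu)"
    using T_prod[OF mu nu] T_prod[OF nu mu] Bm_comm[of Gs nu mu] by simp
  also have "\<dots> = kron ?X (gam mu * gam nu + gam nu * gam mu)"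
    by (rule kron_add_right[symmetric]) (use g in auto)
  also have "\<dots> = kron ?X (0 \<cdot>\<^sub>m 1\<^sub>m r)" using cliff mu nu ne by simp
  also have "\<dots> = 0 \<cdot>\<^sub>m kron ?X (1\<^sub>m r)" by (rule kron_smult_right)
  finally have e: "dirac_term Gs gam mu * dirac_term Gs gam nu + dirac_term Gs gam nu * dirac_term Gs gam mu = 0 \<cdot>\<^sub>m kron ?X (1\<^sub>m r)" .
  have c1: "dirac_term Gs gam mu * dirac_term Gs gam nu \<in> carrier_mat (NN Gs * r) (NN Gs * r)"
    using T_carrier[OF mu] T_carrier[OF nu] by (metis mult_carrier_mat)
  have c2: "dirac_term Gs gam nu * dirac_term Gs gam mu \<in> carrier_mat (NN Gs * r) (NN Gs * r)"
    using T_carrier[OF mu] T_carrier[OF nu] by (metis mult_carrier_mat)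
  have "(dirac_term Gs gam mu * dirac_term Gs gam nu + dirac_term Gs gam nu * dirac_term Gs gam mu) $$ (i,j) = 0"
  proof -
    have dd: "dim_row (kron ?X (1\<^sub>m r)) = NN Gs * r" "dim_col (kron ?X (1\<^sub>m r)) = NN Gs * r" using X by auto
    show ?thesis unfolding e by (subst index_smult_mat) (use dd i j in auto)
  qed
  moreover have "(dirac_term Gs gam mu * dirac_term Gs gam nu + dirac_term Gs gam nu * dirac_term Gs gam mu) $$ (i,j)
     = (dirac_term Gs gam mu * dirac_term Gs gam nu) $$ (i,j) + (dirac_term Gs gam nu * dirac_term Gs gam mu) $$ (i,j)"
    using c2 i j by (subst index_add_mat) auto
  ultimately show ?thesis by simp
qed

lemma T_same: assumes mu: "mu < length Gs"
  shows "dirac_term Gs gam mu * dirac_term Gs gam mu = Ym Gs r mu * Ym Gs r mu"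
proof -
  have "gam mu * gam mu = 1\<^sub>m r"
    using gam_sq[of "gam mu" r] gc cliff mu by simp
  then show ?thesis unfolding T_prod[OF mu mu] Ym_def
    using kron_mult[OF Bm_carrier one_carrier_mat Bm_carrier one_carrier_mat] by simp
qed

lemma DD_entry: assumes i: "i < NN Gs * r" and j: "j < NN Gs * r"
  shows "(dirac Gs gam r * dirac Gs gam r) $$ (i,j) = (\<Sum>mu<length Gs. (Ym Gs r mu * Ym Gs r mu) $$ (i,j))"
proof -
  let ?m = "NN Gs * r" and ?T = "dirac_term Gs gam" and ?D = "length Gs"
  have Dc: "dirac Gs gam r \<in> carrier_mat ?m ?m" using dirac_carrier gc by blast
  have "(dirac Gs gam r * dirac Gs gam r) $$ (i,j) = (\<Sum>k<?m. dirac Gs gam r $$ (i,k) * dirac Gs gam r $$ (k,j))"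
    by (rule mat_mult_entry[OF Dc Dc i j])
  also have "\<dots> = (\<Sum>k<?m. (\<Sum>mu<?D. ?T mu $$ (i,k)) * (\<Sum>nu<?D. ?T nu $$ (k,j)))"
    by (intro sum.cong refl) (use i j gc in \<open>simp add: dirac_index\<close>)
  also have "\<dots> = (\<Sum>k<?m. \<Sum>mu<?D. \<Sum>nu<?D. ?T mu $$ (i,k) * ?T nu $$ (k,j))"
    by (simp add: sum_product)
  also have "\<dots> = (\<Sum>mu<?D. \<Sum>k<?m. \<Sum>nu<?D. ?T mu $$ (i,k) * ?T nu $$ (k,j))"
    by (rule sum.swap)
  also have "\<dots> = (\<Sum>mu<?D. \<Sum>nu<?D. \<Sum>k<?m. ?T mu $$ (i,k) * ?T nu $$ (k,j))"
    by (rule sum.cong[OF refl], rule sum.swap)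
  also have "\<dots> = (\<Sum>mu<?D. \<Sum>nu<?D. (?T mu * ?T nu) $$ (i,j))"
    by (intro sum.cong refl) (simp add: mat_mult_entry[OF T_carrier T_carrier i j])
  also have "\<dots> = (\<Sum>mu<?D. (?T mu * ?T mu) $$ (i,j))"
    by (rule dsum) (use T_anti i j in auto)
  also have "\<dots> = (\<Sum>mu<?D. (Ym Gs r mu * Ym Gs r mu) $$ (i,j))"
    by (intro sum.cong refl) (simp add: T_same)
  finally show ?thesis .
qed

lemma Ym_sgn: "mu < length Gs \<Longrightarrow> sgnmat (-1) (NN Gs * r) (Ym Gs r mu)"
  unfolding Ym_def using kron_sgn[OF Bm_sgn[OF valid] sgn_one[of r]] by simp

lemma ker_dirac: "v \<in> mat_kernel (dirac Gs gam r) \<longleftrightarrow>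
   v \<in> carrier_vec (NN Gs * r) \<and> (\<forall>mu<length Gs. Ym Gs r mu *\<^sub>v v = 0\<^sub>v (NN Gs * r))"
proof -
  let ?m = "NN Gs * r" and ?T = "dirac_term Gs gam" and ?D = "length Gs" and ?Dm = "dirac Gs gam r"
  have Dc: "?Dm \<in> carrier_mat ?m ?m" using dirac_carrier gc by blast
  show ?thesis
  proof
    assume v: "v \<in> mat_kernel ?Dm"
    have vc: "v \<in> carrier_vec ?m" using mat_kernelD[OF Dc v] by simp
    have Dv: "?Dm *\<^sub>v v = 0\<^sub>v ?m" using mat_kernelD[OF Dc v] by simp
    have "(?Dm * ?Dm) *\<^sub>v v = ?Dm *\<^sub>v (?Dm *\<^sub>v v)"
      by (rule assoc_mult_mat_vec[OF Dc Dc vc])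
    also have "\<dots> = 0\<^sub>v ?m" using Dv Dc by auto
    finally have DDv: "(?Dm * ?Dm) *\<^sub>v v = 0\<^sub>v ?m" .
    have DDc: "?Dm * ?Dm \<in> carrier_mat ?m ?m" using Dc by (metis mult_carrier_mat)
    have z: "(\<Sum>q<?m. (\<Sum>mu\<in>{..<?D}. (Ym Gs r mu * Ym Gs r mu) $$ (p,q)) * v $ q) = 0" if p: "p < ?m" for p
    proof -
      have "0 = ((?Dm * ?Dm) *\<^sub>v v) $ p" using DDv p by simp
      also have "\<dots> = (\<Sum>q<?m. (?Dm * ?Dm) $$ (p,q) * v $ q)" by (rule mat_vec_entry[OF DDc vc p])
      also have "\<dots> = (\<Sum>q<?m. (\<Sum>mu\<in>{..<?D}. (Ym Gs r mu * Ym Gs r mu) $$ (p,q)) * v $ q)"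
        by (intro sum.cong refl) (use p in \<open>simp add: DD_entry\<close>)
      finally show ?thesis by simp
    qed
    have "\<forall>mu<?D. Ym Gs r mu *\<^sub>v v = 0\<^sub>v ?m"
      using pos_lemma[of "{..<?D}" ?m "Ym Gs r" v, OF _ _ vc z] Ym_sgn by auto
    then show "v \<in> carrier_vec ?m \<and> (\<forall>mu<?D. Ym Gs r mu *\<^sub>v v = 0\<^sub>v ?m)" using vc by simp
  next
    assume "v \<in> carrier_vec ?m \<and> (\<forall>mu<?D. Ym Gs r mu *\<^sub>v v = 0\<^sub>v ?m)"
    then have vc: "v \<in> carrier_vec ?m" and Y0: "\<And>mu. mu < ?D \<Longrightarrow> Ym Gs r mu *\<^sub>v v = 0\<^sub>v ?m" by auto
    have T0: "?T mu *\<^sub>v v = 0\<^sub>v ?m" if mu: "mu < ?D" for mu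
    proof -
      let ?G = "kron (1\<^sub>m (NN Gs)) (gam mu)"
      have Gc: "?G \<in> carrier_mat ?m ?m" using gc mu by (intro kron_carrier) auto
      have "?G * Ym Gs r mu = kron (1\<^sub>m (NN Gs) * Bm Gs mu) (gam mu * 1\<^sub>m r)"
        unfolding Ym_def using gc mu by (intro kron_mult[OF one_carrier_mat _ Bm_carrier one_carrier_mat]) auto
      also have "\<dots> = ?T mu"
      proof -
        have gm: "gam mu \<in> carrier_mat r r" using gc mu by auto
        show ?thesis by (simp add: left_mult_one_mat[OF Bm_carrier] right_mult_one_mat[OF gm] dirac_term_alt)
      qed
      finally have TG: "?T mu = ?G * Ym Gs r mu" by simp
      have "?T mu *\<^sub>v v = ?G *\<^sub>v (Ym Gs r mu *\<^sub>v v)"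
        unfolding TG by (rule assoc_mult_mat_vec[OF Gc Ym_carrier vc])
      also have "\<dots> = 0\<^sub>v ?m" using Y0[OF mu] mult_zero_vec[OF Gc] by simp
      finally show ?thesis .
    qed
    have "?Dm *\<^sub>v v = 0\<^sub>v ?m"
    proof (rule eq_vecI)
      fix p assume "p < dim_vec (0\<^sub>v ?m :: complex vec)"
      then have p: "p < ?m" by simp
      have "(?Dm *\<^sub>v v) $ p = (\<Sum>q<?m. ?Dm $$ (p,q) * v $ q)" by (rule mat_vec_entry[OF Dc vc p])
      also have "\<dots> = (\<Sum>q<?m. (\<Sum>mu<?D. ?T mu $$ (p,q)) * v $ q)"
        by (intro sum.cong refl) (use p gc in \<open>simp add: dirac_index\<close>)
      also have "\<dots> = (\<Sum>mu<?D. \<Sum>q<?m. ?T mu $$ (p,q) * v $ q)"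
        by (simp add: sum_distrib_right) (rule sum.swap)
      also have "\<dots> = (\<Sum>mu<?D. (?T mu *\<^sub>v v) $ p)"
        by (intro sum.cong refl) (simp add: mat_vec_entry[OF T_carrier vc p])
      also have "\<dots> = 0" using T0 p by simp
      finally show "(?Dm *\<^sub>v v) $ p = 0\<^sub>v ?m $ p" using p by simp
    qed (use Dc in simp)
    then show "v \<in> mat_kernel ?Dm" by (rule mat_kernelI[OF Dc vc])
  qed
qed

end


lemma sum_delta_lt: "(\<Sum>j<(n::nat). (if j = s then f j else 0)) = (if s < n then f s else (0::complex))"
  by (subst sum.delta) auto

lemma mod_succ: assumes "(i::nat) < n" shows "(i+1) mod n = (if i+1 < n then i+1 else 0)"
proof (cases "i+1 < n")
  case True then show ?thesis by simp
next
  case False then have "i+1 = n" using assms by linarith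
  then show ?thesis by simp
qed

lemma mod_pred: assumes "(i::nat) < n" shows "(i+n-1) mod n = (if i = 0 then n-1 else i-1)"
proof (cases "i = 0")
  case True then show ?thesis using assms by simp
next
  case False
  then have "i + n - 1 = (i - 1) + n" by simp
  then have "(i+n-1) mod n = (i-1) mod n" by (metis mod_add_self2)
  then show ?thesis using False assms by simp
qed

lemma A_row: assumes v: "valid_factor G" and y: "y \<in> carrier_vec (nverts G)" and i: "i < nverts G"
  shows "(A_as G *\<^sub>v y) $ i = (case G of
      Cycle n \<Rightarrow> y $ ((i+1) mod n) - y $ ((i+n-1) mod n)
    | Path n \<Rightarrow> (if i+1 < n then y $ (i+1) else 0) - (if 0 < i then y $ (i-1) else 0))"
proof (cases G)
  case (Cycle n)
  have n: "n \<ge> 3" using v Cycle by simp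
  have iN: "i < n" using i Cycle by simp
  have s: "(i+1) mod n < n" "(i+n-1) mod n < n" using n by auto
  have ne: "(i+1) mod n \<noteq> (i+n-1) mod n"
  proof
    assume "(i+1) mod n = (i+n-1) mod n"
    then have "(i+1) mod n = (i+n-1) mod n" .
    moreover have "(i+1) mod n = (if i+1 < n then i+1 else 0)" using iN by (rule mod_succ)
    moreover have "(i+n-1) mod n = (if i = 0 then n-1 else i-1)" using iN by (rule mod_pred)
    ultimately show False using n iN by (auto split: if_splits)
  qed
  have e1: "edge G i j \<longleftrightarrow> j = (i+1) mod n" if j: "j < n" for j
  proof -
    have "(i+1) mod n = (if i+1 < n then i+1 else 0)" using iN by (rule mod_succ)
    then show ?thesis using Cycle iN j n by auto
  qed
  have e2: "edge G j i \<longleftrightarrow> j = (i+n-1) mod n" if j: "j < n" for j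
  proof -
    have "(i+n-1) mod n = (if i = 0 then n-1 else i-1)" using iN by (rule mod_pred)
    then show ?thesis using Cycle iN j n by auto
  qed
  have "(A_as G *\<^sub>v y) $ i = (\<Sum>j<n. A_as G $$ (i,j) * y $ j)"
    using mat_vec_entry[OF A_as_carrier y i] Cycle by simp
  also have "\<dots> = (\<Sum>j<n. (if j = (i+1) mod n then y $ j else 0) - (if j = (i+n-1) mod n then y $ j else 0))"
  proof (rule sum.cong[OF refl])
    fix j assume "j \<in> {..<n}"
    then have j: "j < n" by simp
    show "A_as G $$ (i,j) * y $ j = (if j = (i+1) mod n then y $ j else 0) - (if j = (i+n-1) mod n then y $ j else 0)"
      using e1[OF j] e2[OF j] ne iN j Cycle by (auto simp: A_as_def)
  qed
  also have "\<dots> = y $ ((i+1) mod n) - y $ ((i+n-1) mod n)"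
    by (simp only: sum_subtractf sum_delta_lt s if_True)
  finally show ?thesis using Cycle by simp
next
  case (Path n)
  have iN: "i < n" using i Path by simp
  have "(A_as G *\<^sub>v y) $ i = (\<Sum>j<n. A_as G $$ (i,j) * y $ j)"
    using mat_vec_entry[OF A_as_carrier y i] Path by simp
  also have "\<dots> = (\<Sum>j<n. (if j = i+1 then y $ j else 0) - (if j = i-1 \<and> 0 < i then y $ j else 0))"
  proof (rule sum.cong[OF refl])
    fix j assume "j \<in> {..<n}"
    then have j: "j < n" by simp
    show "A_as G $$ (i,j) * y $ j = (if j = i+1 then y $ j else 0) - (if j = i-1 \<and> 0 < i then y $ j else 0)"
      using iN j Path by (auto simp: A_as_def)
  qed
  also have "\<dots> = (\<Sum>j<n. (if j = i+1 then y $ j else 0)) - (\<Sum>j<n. (if j = i-1 then (if 0 < i then y $ j else 0) else 0))"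
    by (simp only: sum_subtractf) (intro arg_cong2[where f=minus] refl sum.cong, auto)
  also have "\<dots> = (if i+1 < n then y $ (i+1) else 0) - (if 0 < i then y $ (i-1) else 0)"
    using iN by (simp only: sum_delta_lt) auto
  finally show ?thesis using Path by simp
qed

definition Kf :: "factor \<Rightarrow> nat set" where
  "Kf G = (case G of Cycle n \<Rightarrow> if even n then {0,1} else {0} | Path n \<Rightarrow> if even n then {} else {0})"

definition wv :: "factor \<Rightarrow> nat \<Rightarrow> nat \<Rightarrow> complex" where
  "wv G k i = (case G of Cycle n \<Rightarrow> if even n then (if i mod 2 = k then 1 else 0) else 1
                        | Path n \<Rightarrow> if i mod 2 = k then 1 else 0)"

lemma Kf_sub: "valid_factor G \<Longrightarrow> Kf G \<subseteq> {..<nverts G}"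
  by (cases G) (auto simp: Kf_def)

lemma Kf_fin[simp]: "finite (Kf G)"
  by (cases G) (auto simp: Kf_def)

lemma wv_K: "j \<in> Kf G \<Longrightarrow> k \<in> Kf G \<Longrightarrow> wv G j k = (if k = j then 1 else 0)"
  by (cases G) (auto simp: Kf_def wv_def split: if_splits)


lemma zero_vec_iff: "(w :: complex vec) \<in> carrier_vec n \<Longrightarrow> (w = 0\<^sub>v n) \<longleftrightarrow> (\<forall>i<n. w $ i = 0)"
  by auto

lemma cycle_ker: assumes n: "n \<ge> 3" and y: "y \<in> carrier_vec n"
  shows "(\<forall>i<n. y $ ((i+1) mod n) = y $ ((i+n-1) mod n)) \<longleftrightarrow>
         (\<forall>i<n. y $ i = (if even n then y $ (i mod 2) else y $ 0))"
proof
  assume R: "\<forall>i<n. y $ ((i+1) mod n) = y $ ((i+n-1) mod n)"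
  have step: "y $ i = y $ (i-2)" if "2 \<le> i" "i < n" for i
  proof -
    have "y $ (((i-1)+1) mod n) = y $ (((i-1)+n-1) mod n)" by (rule R[rule_format]) (use that in simp)
    moreover have "((i-1)+1) mod n = i" using that by simp
    moreover have "((i-1)+n-1) mod n = i-2" using mod_pred[of "i-1" n] that by simp
    ultimately show ?thesis by simp
  qed
  have par: "y $ i = y $ (i mod 2)" if "i < n" for i
    using that
  proof (induction i rule: less_induct)
    case (less i)
    show ?case
    proof (cases "i < 2")
      case True then show ?thesis by simp
    next
      case False
      then have "y $ i = y $ (i-2)" using step less.prems by simp
      also have "\<dots> = y $ ((i-2) mod 2)" by (rule less.IH) (use False less.prems in auto)
      also have "(i-2) mod 2 = i mod 2" using False by presburger
      finally show ?thesis .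
    qed
  qed
  show "\<forall>i<n. y $ i = (if even n then y $ (i mod 2) else y $ 0)"
  proof (cases "even n")
    case True
    show ?thesis
    proof (intro allI impI)
      fix i assume i: "i < n"
      show "y $ i = (if even n then y $ (i mod 2) else y $ 0)" using par[OF i] True by simp
    qed
  next
    case False
    have n0: "0 < n" using n by simp
    have "y $ ((0+1) mod n) = y $ ((0+n-1) mod n)" using R n0 by blast
    moreover have "(0+1) mod n = 1" "(0+n-1) mod n = n-1" using n by auto
    ultimately have "y $ 1 = y $ (n-1)" by simp
    also have "\<dots> = y $ ((n-1) mod 2)" by (rule par) (use n in simp)
    also have "(n-1) mod 2 = 0" using False n by presburger
    finally have y1: "y $ 1 = y $ 0" .
    have yy: "y $ (i mod 2) = y $ 0" for i
    proof (cases "i mod 2 = 0")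
      case True then show ?thesis by simp
    next
      case False then have "i mod 2 = 1" by presburger
      then show ?thesis using y1 by simp
    qed
    show ?thesis
    proof (intro allI impI)
      fix i assume i: "i < n"
      show "y $ i = (if even n then y $ (i mod 2) else y $ 0)" using par[OF i] False yy[of i] by simp
    qed
  qed
next
  assume T: "\<forall>i<n. y $ i = (if even n then y $ (i mod 2) else y $ 0)"
  show "\<forall>i<n. y $ ((i+1) mod n) = y $ ((i+n-1) mod n)"
  proof (intro allI impI)
    fix i assume i: "i < n"
    have a: "(i+1) mod n < n" "(i+n-1) mod n < n" using n by auto
    show "y $ ((i+1) mod n) = y $ ((i+n-1) mod n)"
    proof (cases "even n")
      case True
      have "(i+1) mod n mod 2 = (i+1) mod 2" using True by (simp add: mod_mod_cancel)
      moreover have "(i+n-1) mod n mod 2 = (i+n-1) mod 2" using True by (simp add: mod_mod_cancel)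
      moreover have "(i+n-1) mod 2 = (i+1) mod 2"
      proof -
        have "i+n-1 = (i+1) + 2*(n div 2 - 1)" using True n by auto
        then show ?thesis by simp
      qed
      moreover have "y $ ((i+1) mod n) = y $ ((i+1) mod n mod 2)" using T[rule_format, OF a(1)] True by simp
      moreover have "y $ ((i+n-1) mod n) = y $ ((i+n-1) mod n mod 2)" using T[rule_format, OF a(2)] True by simp
      ultimately show ?thesis by simp
    next
      case False then show ?thesis using T[rule_format, OF a(1)] T[rule_format, OF a(2)] by simp
    qed
  qed
qed


lemma mod2_sub2: assumes "2 \<le> (i::nat)" shows "(i - 2) mod 2 = i mod 2"
proof -
  have "i = (i-2) + 2" using assms by simp
  then have "i mod 2 = ((i-2)+2) mod 2" by simp
  then show ?thesis by simp
qed

lemma path_ker: assumes n: "n \<ge> 2" and y: "y \<in> carrier_vec n"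
  shows "(\<forall>i<n. (if i+1 < n then y $ (i+1) else 0) = (if 0 < i then y $ (i-1) else (0::complex))) \<longleftrightarrow>
         (\<forall>i<n. y $ i = (if even n then 0 else (if i mod 2 = 0 then y $ 0 else 0)))"
proof
  assume R: "\<forall>i<n. (if i+1 < n then y $ (i+1) else 0) = (if 0 < i then y $ (i-1) else (0::complex))"
  have y1: "y $ 1 = 0" using R[rule_format, of 0] n by simp
  have step: "y $ i = y $ (i-2)" if "2 \<le> i" "i < n" for i
  proof -
    have "(if (i-1)+1 < n then y $ ((i-1)+1) else 0) = (if 0 < i-1 then y $ ((i-1)-1) else 0)"
      by (rule R[rule_format]) (use that in simp)
    then show ?thesis using that by (simp add: numeral_2_eq_2)
  qed
  have par: "y $ i = (if i mod 2 = 0 then y $ 0 else 0)" if "i < n" for i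
    using that
  proof (induction i rule: less_induct)
    case (less i)
    show ?case
    proof (cases "i < 2")
      case True
      then have "i = 0 \<or> i = 1" by auto
      then show ?thesis using y1 by auto
    next
      case False
      then have "y $ i = y $ (i-2)" using step less.prems by simp
      also have "\<dots> = (if (i-2) mod 2 = 0 then y $ 0 else 0)" by (rule less.IH) (use False less.prems in auto)
      also have "(i-2) mod 2 = i mod 2" using False by (simp add: mod2_sub2)
      finally show ?thesis .
    qed
  qed
  show "\<forall>i<n. y $ i = (if even n then 0 else (if i mod 2 = 0 then y $ 0 else 0))"
  proof (cases "even n")
    case False
    show ?thesis
    proof (intro allI impI)
      fix i assume i: "i < n"
      show "y $ i = (if even n then 0 else (if i mod 2 = 0 then y $ 0 else 0))" using par[OF i] False by simp
    qed
  next
    case True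
    have "0 = (if 0 < n-1 then y $ ((n-1)-1) else 0)"
      using R[rule_format, of "n-1"] n by simp
    then have "y $ (n-2) = 0" using n by (simp add: numeral_2_eq_2)
    moreover have "y $ (n-2) = (if (n-2) mod 2 = 0 then y $ 0 else 0)" by (rule par) (use n in simp)
    moreover have "(n-2) mod 2 = 0" using True n mod2_sub2[of n] by simp
    ultimately have y0: "y $ 0 = 0" by simp
    show ?thesis
    proof (intro allI impI)
      fix i assume i: "i < n"
      show "y $ i = (if even n then 0 else (if i mod 2 = 0 then y $ 0 else 0))" using par[OF i] True y0 by simp
    qed
  qed
next
  assume T: "\<forall>i<n. y $ i = (if even n then 0 else (if i mod 2 = 0 then y $ 0 else 0))"
  have y0: "even n \<Longrightarrow> y $ 0 = 0" using T[rule_format, of 0] n by simp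
  have Ti: "y $ i = (if i mod 2 = 0 then y $ 0 else 0)" if "i < n" for i
    using T[rule_format, OF that] y0 by (cases "even n") auto
  show "\<forall>i<n. (if i+1 < n then y $ (i+1) else 0) = (if 0 < i then y $ (i-1) else (0::complex))"
  proof (intro allI impI)
    fix i assume i: "i < n"
    consider (z) "i = 0" | (mid) "0 < i" "i+1 < n" | (last) "0 < i" "i+1 = n" using i by linarith
    then show "(if i+1 < n then y $ (i+1) else 0) = (if 0 < i then y $ (i-1) else (0::complex))"
    proof cases
      case z then show ?thesis using Ti[of 1] n by simp
    next
      case mid
      have "(i+1) mod 2 = (i-1) mod 2" using mid mod2_sub2[of "i+1"] by simp
      then show ?thesis using Ti[of "i+1"] Ti[of "i-1"] mid by simp
    next
      case last
      have "y $ (i-1) = 0"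
      proof (cases "even n")
        case True then show ?thesis using Ti[of "i-1"] y0 last by simp
      next
        case False
        have "i - 1 = n - 2" "2 \<le> n" using last by auto
        then have "(i-1) mod 2 = 1" using False mod2_sub2[of n] by (simp add: odd_iff_mod_2_eq_one)
        then show ?thesis using Ti[of "i-1"] last by simp
      qed
      then show ?thesis using last by simp
    qed
  qed
qed

lemma A_ker: assumes v: "valid_factor G" and y: "y \<in> carrier_vec (nverts G)"
  shows "A_as G *\<^sub>v y = 0\<^sub>v (nverts G) \<longleftrightarrow> (\<forall>i<nverts G. y $ i = (\<Sum>k\<in>Kf G. y $ k * wv G k i))"
proof -
  have Ac: "A_as G *\<^sub>v y \<in> carrier_vec (nverts G)" using mult_mat_vec_carrier[OF A_as_carrier y] .
  have "A_as G *\<^sub>v y = 0\<^sub>v (nverts G) \<longleftrightarrow> (\<forall>i<nverts G. (A_as G *\<^sub>v y) $ i = 0)"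
    by (rule zero_vec_iff[OF Ac])
  also have "\<dots> \<longleftrightarrow> (\<forall>i<nverts G. y $ i = (\<Sum>k\<in>Kf G. y $ k * wv G k i))"
  proof (cases G)
    case (Cycle n)
    have n: "n \<ge> 3" using v Cycle by simp
    have yc: "y \<in> carrier_vec n" using y Cycle by simp
    have "(\<forall>i<nverts G. (A_as G *\<^sub>v y) $ i = 0) \<longleftrightarrow> (\<forall>i<n. y $ ((i+1) mod n) = y $ ((i+n-1) mod n))"
      using A_row[OF v y] Cycle by simp
    also have "\<dots> \<longleftrightarrow> (\<forall>i<n. y $ i = (if even n then y $ (i mod 2) else y $ 0))"
      by (rule cycle_ker[OF n yc])
    also have "\<dots> \<longleftrightarrow> (\<forall>i<nverts G. y $ i = (\<Sum>k\<in>Kf G. y $ k * wv G k i))"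
    proof -
      have "(\<Sum>k\<in>Kf G. y $ k * wv G k i) = (if even n then y $ (i mod 2) else y $ 0)" for i
      proof (cases "even n")
        case True
        have "i mod 2 = 0 \<or> i mod 2 = 1" by auto
        then show ?thesis using True Cycle by (auto simp: Kf_def wv_def)
      next
        case False then show ?thesis using Cycle by (simp add: Kf_def wv_def)
      qed
      then show ?thesis using Cycle by simp
    qed
    finally show ?thesis .
  next
    case (Path n)
    have n: "n \<ge> 2" using v Path by simp
    have yc: "y \<in> carrier_vec n" using y Path by simp
    have "(\<forall>i<nverts G. (A_as G *\<^sub>v y) $ i = 0) \<longleftrightarrow> (\<forall>i<n. (if i+1 < n then y $ (i+1) else 0) = (if 0 < i then y $ (i-1) else 0))"
      using A_row[OF v y] Path by simp
    also have "\<dots> \<longleftrightarrow> (\<forall>i<n. y $ i = (if even n then 0 else (if i mod 2 = 0 then y $ 0 else 0)))"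
      by (rule path_ker[OF n yc])
    also have "\<dots> \<longleftrightarrow> (\<forall>i<nverts G. y $ i = (\<Sum>k\<in>Kf G. y $ k * wv G k i))"
    proof -
      have "(\<Sum>k\<in>Kf G. y $ k * wv G k i) = (if even n then 0 else (if i mod 2 = 0 then y $ 0 else 0))" for i
        using Path by (simp add: Kf_def wv_def)
      then show ?thesis using Path by simp
    qed
    finally show ?thesis .
  qed
  finally show ?thesis .
qed


lemma ST_gen:
  fixes f :: "nat \<Rightarrow> nat \<Rightarrow> complex"
  assumes ff: "\<And>i k j. f i k * f k j = 0"
  shows "mat n n (\<lambda>(i,j). (if i = j then 1 else 0) + f i j) * mat n n (\<lambda>(i,j). (if i = j then 1 else 0) - f i j) = 1\<^sub>m n"
    and "mat n n (\<lambda>(i,j). (if i = j then 1 else 0) - f i j) * mat n n (\<lambda>(i,j). (if i = j then 1 else 0) + f i j) = 1\<^sub>m n"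
proof -
  let ?d = "\<lambda>i j. if i = j then 1 else (0::complex)"
  show "mat n n (\<lambda>(i,j). ?d i j + f i j) * mat n n (\<lambda>(i,j). ?d i j - f i j) = 1\<^sub>m n"
  proof (rule eq_matI)
    fix i j assume i: "i < dim_row (1\<^sub>m n :: complex mat)" and j: "j < dim_col (1\<^sub>m n :: complex mat)"
    then have i': "i < n" and j': "j < n" by auto
    have e: "(?d i k + f i k) * (?d k j - f k j) = (if k = i then ?d k j - f k j else 0) + (if k = j then f i k else 0) - f i k * f k j" for k
      by (auto simp: algebra_simps)
    have "(mat n n (\<lambda>(i,j). ?d i j + f i j) * mat n n (\<lambda>(i,j). ?d i j - f i j)) $$ (i,j) = (\<Sum>k<n. (?d i k + f i k) * (?d k j - f k j))"
      by (subst mat_mult_entry[of _ n n _ n]) (use i' j' in auto)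
    also have "\<dots> = (\<Sum>k<n. (if k = i then ?d k j - f k j else 0)) + (\<Sum>k<n. (if k = j then f i k else 0)) - (\<Sum>k<n. f i k * f k j)"
      unfolding e by (simp add: sum.distrib sum_subtractf)
    also have "\<dots> = ?d i j"
      using i' j' ff by (simp add: sum.delta)
    finally show "(mat n n (\<lambda>(i,j). ?d i j + f i j) * mat n n (\<lambda>(i,j). ?d i j - f i j)) $$ (i,j) = (1\<^sub>m n :: complex mat) $$ (i,j)"
      using i' j' by simp
  qed auto
  show "mat n n (\<lambda>(i,j). ?d i j - f i j) * mat n n (\<lambda>(i,j). ?d i j + f i j) = 1\<^sub>m n"
  proof (rule eq_matI)
    fix i j assume i: "i < dim_row (1\<^sub>m n :: complex mat)" and j: "j < dim_col (1\<^sub>m n :: complex mat)"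
    then have i': "i < n" and j': "j < n" by auto
    have e: "(?d i k - f i k) * (?d k j + f k j) = (if k = i then ?d k j + f k j else 0) - (if k = j then f i k else 0) - f i k * f k j" for k
      by (auto simp: algebra_simps)
    have "(mat n n (\<lambda>(i,j). ?d i j - f i j) * mat n n (\<lambda>(i,j). ?d i j + f i j)) $$ (i,j) = (\<Sum>k<n. (?d i k - f i k) * (?d k j + f k j))"
      by (subst mat_mult_entry[of _ n n _ n]) (use i' j' in auto)
    also have "\<dots> = (\<Sum>k<n. (if k = i then ?d k j + f k j else 0)) - (\<Sum>k<n. (if k = j then f i k else 0)) - (\<Sum>k<n. f i k * f k j)"
      unfolding e by (simp add: sum.distrib sum_subtractf)
    also have "\<dots> = ?d i j"
      using i' j' ff by (simp add: sum.delta)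
    finally show "(mat n n (\<lambda>(i,j). ?d i j - f i j) * mat n n (\<lambda>(i,j). ?d i j + f i j)) $$ (i,j) = (1\<^sub>m n :: complex mat) $$ (i,j)"
      using i' j' by simp
  qed auto
qed

definition nf :: "factor \<Rightarrow> nat \<Rightarrow> nat \<Rightarrow> complex" where
  "nf G i j = (if j \<in> Kf G \<and> i \<noteq> j then wv G j i else 0)"

definition Sf :: "factor \<Rightarrow> complex mat" where
  "Sf G = mat (nverts G) (nverts G) (\<lambda>(i,j). (if i = j then 1 else 0) + nf G i j)"

definition Tf :: "factor \<Rightarrow> complex mat" where
  "Tf G = mat (nverts G) (nverts G) (\<lambda>(i,j). (if i = j then 1 else 0) - nf G i j)"

lemma nf_prod: "nf G i k * nf G k j = 0"
proof (cases "nf G i k = 0 \<or> nf G k j = 0")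
  case False
  then have k: "k \<in> Kf G" and j: "j \<in> Kf G" "k \<noteq> j" and w: "wv G j k \<noteq> 0" by (auto simp: nf_def split: if_splits)
  then show ?thesis using wv_K[OF j(1) k] by simp
qed auto

lemma Sf_carrier[simp]: "Sf G \<in> carrier_mat (nverts G) (nverts G)" by (simp add: Sf_def)
lemma Tf_carrier[simp]: "Tf G \<in> carrier_mat (nverts G) (nverts G)" by (simp add: Tf_def)

lemma ST: "Sf G * Tf G = 1\<^sub>m (nverts G)" "Tf G * Sf G = 1\<^sub>m (nverts G)"
  unfolding Sf_def Tf_def using ST_gen[of "nf G", OF nf_prod] by auto

lemma S_apply: assumes v: "valid_factor G" and x: "x \<in> carrier_vec (nverts G)" and i: "i < nverts G"
  shows "(Sf G *\<^sub>v x) $ i = x $ i + (\<Sum>j\<in>Kf G - {i}. wv G j i * x $ j)"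
proof -
  let ?n = "nverts G"
  have "(Sf G *\<^sub>v x) $ i = (\<Sum>j<?n. Sf G $$ (i,j) * x $ j)" by (rule mat_vec_entry[OF Sf_carrier x i])
  also have "\<dots> = (\<Sum>j<?n. (if j = i then x $ j else 0) + nf G i j * x $ j)"
    by (intro sum.cong refl) (use i in \<open>auto simp: Sf_def algebra_simps\<close>)
  also have "\<dots> = x $ i + (\<Sum>j<?n. nf G i j * x $ j)"
    using i by (simp add: sum.distrib sum.delta)
  also have "(\<Sum>j<?n. nf G i j * x $ j) = (\<Sum>j\<in>Kf G - {i}. wv G j i * x $ j)"
  proof -
    have "(\<Sum>j<?n. nf G i j * x $ j) = (\<Sum>j\<in>Kf G - {i}. nf G i j * x $ j)"
      by (rule sum.mono_neutral_right) (use Kf_sub[OF v] in \<open>auto simp: nf_def\<close>)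
    also have "\<dots> = (\<Sum>j\<in>Kf G - {i}. wv G j i * x $ j)"
      by (intro sum.cong refl) (auto simp: nf_def)
    finally show ?thesis .
  qed
  finally show ?thesis .
qed

lemma AS_ker: assumes v: "valid_factor G"
  shows "mat_kernel (A_as G * Sf G) = {x \<in> carrier_vec (nverts G). \<forall>i<nverts G. i \<notin> Kf G \<longrightarrow> x $ i = 0}"
proof -
  let ?n = "nverts G" and ?K = "Kf G"
  have ASc: "A_as G * Sf G \<in> carrier_mat ?n ?n" by (metis A_as_carrier Sf_carrier mult_carrier_mat)
  have "x \<in> mat_kernel (A_as G * Sf G) \<longleftrightarrow> x \<in> carrier_vec ?n \<and> (\<forall>i<?n. i \<notin> ?K \<longrightarrow> x $ i = 0)" for x
  proof (cases "x \<in> carrier_vec ?n")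
    case False
    then show ?thesis using mat_kernel_carrier[OF ASc] by auto
  next
    case x: True
    have Sx: "Sf G *\<^sub>v x \<in> carrier_vec ?n" using mult_mat_vec_carrier[OF Sf_carrier x] .
    have Sxk: "(Sf G *\<^sub>v x) $ k = x $ k" if k: "k \<in> ?K" for k
    proof -
      have kn: "k < ?n" using Kf_sub[OF v] k by auto
      have "(\<Sum>j\<in>?K - {k}. wv G j k * x $ j) = 0"
        by (rule sum.neutral) (use wv_K k in auto)
      then show ?thesis using S_apply[OF v x kn] by simp
    qed
    have "x \<in> mat_kernel (A_as G * Sf G) \<longleftrightarrow> A_as G *\<^sub>v (Sf G *\<^sub>v x) = 0\<^sub>v ?n"
      using x ASc assoc_mult_mat_vec[OF A_as_carrier Sf_carrier x] by (simp add: mat_kernel_def carrier_matD[OF A_as_carrier] carrier_matD[OF Sf_carrier])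
    also have "\<dots> \<longleftrightarrow> (\<forall>i<?n. (Sf G *\<^sub>v x) $ i = (\<Sum>k\<in>?K. (Sf G *\<^sub>v x) $ k * wv G k i))"
      by (rule A_ker[OF v Sx])
    also have "\<dots> \<longleftrightarrow> (\<forall>i<?n. i \<notin> ?K \<longrightarrow> x $ i = 0)"
    proof -
      have "(Sf G *\<^sub>v x) $ i = (\<Sum>k\<in>?K. (Sf G *\<^sub>v x) $ k * wv G k i) \<longleftrightarrow> (i \<notin> ?K \<longrightarrow> x $ i = 0)" if i: "i < ?n" for i
      proof -
        have rhs: "(\<Sum>k\<in>?K. (Sf G *\<^sub>v x) $ k * wv G k i) = (\<Sum>k\<in>?K. wv G k i * x $ k)"
          by (intro sum.cong refl) (simp add: Sxk mult.commute)
        show ?thesis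
        proof (cases "i \<in> ?K")
          case True
          have "(\<Sum>k\<in>?K. wv G k i * x $ k) = (\<Sum>k\<in>?K. if k = i then x $ k else 0)"
            by (intro sum.cong refl) (use wv_K True in auto)
          also have "\<dots> = x $ i" using True by (simp add: sum.delta)
          finally show ?thesis using rhs Sxk[OF True] True by simp
        next
          case False
          then have "?K - {i} = ?K" by auto
          then show ?thesis using rhs S_apply[OF v x i] False by simp
        qed
      qed
      then show ?thesis by auto
    qed
    finally show ?thesis using x by simp
  qed
  then show ?thesis by auto
qed


lemma kdim_eq: "mat_kernel A = mat_kernel B \<Longrightarrow> kernel.dim m A = kernel.dim m (B :: 'a::field mat)"
  by simp

lemma kdim_full: assumes "mat_kernel A = carrier_vec m"
  shows "kernel.dim m (A :: complex mat) = m"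
proof -
  have "(module_vec TYPE(complex) m)\<lparr>carrier := carrier_vec m\<rparr> = module_vec TYPE(complex) m"
    by (simp add: module_vec_def)
  then show ?thesis using assms vec_space.dim_is_n[of m] by simp
qed

definition diagm :: "nat set \<Rightarrow> nat \<Rightarrow> complex mat" where
  "diagm J m = mat m m (\<lambda>(i,j). if i = j \<and> i \<notin> J then 1 else 0)"

lemma diagm_kernel: "mat_kernel (diagm J m) = {w \<in> carrier_vec m. \<forall>p<m. p \<notin> J \<longrightarrow> w $ p = 0}"
proof -
  have c: "diagm J m \<in> carrier_mat m m" by (simp add: diagm_def)
  have "diagm J m *\<^sub>v w = 0\<^sub>v m \<longleftrightarrow> (\<forall>p<m. p \<notin> J \<longrightarrow> w $ p = 0)" if w: "w \<in> carrier_vec m" for w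
  proof -
    have e: "(diagm J m *\<^sub>v w) $ p = (if p \<notin> J then w $ p else 0)" if p: "p < m" for p
    proof -
      have "(diagm J m *\<^sub>v w) $ p = (\<Sum>k<m. diagm J m $$ (p,k) * w $ k)" by (rule mat_vec_entry[OF c w p])
      also have "\<dots> = (\<Sum>k<m. if k = p then (if p \<notin> J then w $ k else 0) else 0)"
        by (intro sum.cong refl) (use p in \<open>auto simp: diagm_def\<close>)
      also have "\<dots> = (if p \<notin> J then w $ p else 0)" using p by (simp add: sum.delta)
      finally show ?thesis .
    qed
    have "diagm J m *\<^sub>v w \<in> carrier_vec m" using mult_mat_vec_carrier[OF c w] .
    then have "diagm J m *\<^sub>v w = 0\<^sub>v m \<longleftrightarrow> (\<forall>p<m. (diagm J m *\<^sub>v w) $ p = 0)" by (rule zero_vec_iff)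
    also have "\<dots> \<longleftrightarrow> (\<forall>p<m. p \<notin> J \<longrightarrow> w $ p = 0)" using e by auto
    finally show ?thesis .
  qed
  then show ?thesis using c unfolding mat_kernel_def by auto
qed

lemma diagm_dim: "kernel.dim m (diagm J m) = card (J \<inter> {..<m})"
proof (induction m)
  case 0
  have "mat_kernel (diagm J 0) = carrier_vec 0" by (auto simp: diagm_kernel)
  then show ?case using kdim_full by simp
next
  case (Suc m)
  let ?d = "mat 1 1 (\<lambda>_. if m \<notin> J then 1 else 0) :: complex mat"
  have eq: "diagm J (m + 1) = four_block_mat (diagm J m) (0\<^sub>m m 1) (0\<^sub>m 1 m) ?d"
    by (rule eq_matI) (auto simp: diagm_def four_block_mat_def less_Suc_eq)
  have "kernel.dim (m+1) (diagm J (m+1)) = kernel.dim m (diagm J m) + kernel.dim 1 ?d"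
    by (rule kernel_four_block_0_mat[OF eq]) (auto simp: diagm_def)
  moreover have "kernel.dim 1 ?d = (if m \<in> J then 1 else 0)"
  proof (cases "m \<in> J")
    case True
    have "?d *\<^sub>v x = 0\<^sub>v 1" if "x \<in> carrier_vec 1" for x
      using True that by (intro eq_vecI) (auto simp: scalar_prod_def)
    then have "mat_kernel ?d = carrier_vec 1" using True by (auto simp: mat_kernel_def)
    then show ?thesis using kdim_full True by simp
  next
    case False
    then have "?d = 1\<^sub>m 1" by (auto simp: one_mat_def)
    then show ?thesis using False kernel_one_mat(1)[of 1] by simp
  qed
  moreover have "card (J \<inter> {..<m+1}) = card (J \<inter> {..<m}) + (if m \<in> J then 1 else 0)"
  proof -
    have "J \<inter> {..<m+1} = (J \<inter> {..<m}) \<union> (if m \<in> J then {m} else {})" by (auto simp: less_Suc_eq)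
    then show ?thesis by (auto simp: card_insert_if)
  qed
  ultimately show ?case using Suc by simp
qed

lemma coord_dim: assumes A: "A \<in> carrier_mat nr m"
  and K: "mat_kernel A = {w \<in> carrier_vec m. \<forall>p<m. p \<notin> J \<longrightarrow> w $ p = 0}"
  shows "kernel.dim m (A :: complex mat) = card (J \<inter> {..<m})"
proof -
  have "kernel.dim m A = kernel.dim m (diagm J m)"
    by (rule kdim_eq) (simp add: K diagm_kernel)
  then show ?thesis using diagm_dim by simp
qed

lemma card_split:
  "card {p. p < n*M \<and> Q (p div M) \<and> R (p mod M)} = card {d. d < n \<and> Q d} * card {q. q < (M::nat) \<and> R q}"
proof -
  have eq: "{p. p < n*M \<and> Q (p div M) \<and> R (p mod M)} = (\<lambda>(d,q). d*M + q) ` ({d. d < n \<and> Q d} \<times> {q. q < M \<and> R q})"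
  proof
    show "{p. p < n*M \<and> Q (p div M) \<and> R (p mod M)} \<subseteq> (\<lambda>(d,q). d*M + q) ` ({d. d < n \<and> Q d} \<times> {q. q < M \<and> R q})"
    proof
      fix p assume p: "p \<in> {p. p < n*M \<and> Q (p div M) \<and> R (p mod M)}"
      then have pp: "p < n*M" by simp
      then have "0 < n*M" by linarith
      then have M: "M > 0" by simp
      have "p = (\<lambda>(d,q). d*M + q) (p div M, p mod M)" by simp
      moreover have "(p div M, p mod M) \<in> {d. d < n \<and> Q d} \<times> {q. q < M \<and> R q}"
        using p M by (auto simp: less_mult_imp_div_less)
      ultimately show "p \<in> (\<lambda>(d,q). d*M + q) ` ({d. d < n \<and> Q d} \<times> {q. q < M \<and> R q})" by blast
    qed
    show "(\<lambda>(d,q). d*M + q) ` ({d. d < n \<and> Q d} \<times> {q. q < M \<and> R q}) \<subseteq> {p. p < n*M \<and> Q (p div M) \<and> R (p mod M)}"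
      using idx_bound by auto
  qed
  have inj: "inj_on (\<lambda>(d,q). d*M + q) ({d. d < n \<and> Q d} \<times> {q. q < M \<and> R q})"
  proof (rule inj_onI)
    fix x y assume x: "x \<in> {d. d < n \<and> Q d} \<times> {q. q < M \<and> R q}" and y: "y \<in> {d. d < n \<and> Q d} \<times> {q. q < M \<and> R q}"
      and e: "(\<lambda>(d,q). d*M + q) x = (\<lambda>(d,q). d*M + q) y"
    obtain a b where x': "x = (a,b)" by force
    obtain c d where y': "y = (c,d)" by force
    have "b < M" "d < M" using x y x' y' by auto
    moreover have "a*M + b = c*M + d" using e x' y' by simp
    ultimately have "(a*M+b) div M = (c*M+d) div M" "(a*M+b) mod M = (c*M+d) mod M" by simp_all
    then show "x = y" using x' y' \<open>b < M\<close> \<open>d < M\<close> by simp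
  qed
  show ?thesis unfolding eq card_image[OF inj] card_cartesian_product ..
qed


lemma idx_div: "(z::nat) < m \<Longrightarrow> (x*m + z) div m = x" by simp
lemma idx_mod: "(z::nat) < m \<Longrightarrow> (x*m + z) mod m = z" by simp

lemma decomp3: assumes p: "p < a*((n::nat)*b)"
  shows "p = p div (n*b) * (n*b) + (p div b mod n * b + p mod b)"
    and "p div (n*b) < a" "p div b mod n < n" "p mod b < b"
proof -
  have "0 < a*(n*b)" using p by linarith
  then have pos: "0 < a" "0 < n" "0 < b" by auto
  have "p = p div (n*b) * (n*b) + p mod (n*b)" by (rule div_mult_mod_eq[symmetric])
  moreover have "p mod (n*b) = p mod (n*b) div b * b + p mod (n*b) mod b" by (rule div_mult_mod_eq[symmetric])
  moreover have "p mod (n*b) div b = p div b mod n" by (rule mod_mult_div)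
  moreover have "p mod (n*b) mod b = p mod b" by (rule mod_mult_mod)
  ultimately show "p = p div (n*b) * (n*b) + (p div b mod n * b + p mod b)" by metis
  show "p div (n*b) < a" using p pos by (simp add: less_mult_imp_div_less)
  show "p div b mod n < n" using pos by simp
  show "p mod b < b" using pos by simp
qed

lemma idx3_dig: assumes "k < n" "y < b"
  shows "(x*((n::nat)*b) + (k*b + y)) div b mod n = k"
proof -
  have e: "x*(n*b) + (k*b + y) = (x*n + k) * b + y" by (simp add: algebra_simps)
  have "(x*(n*b) + (k*b + y)) div b = x*n + k" unfolding e using assms by simp
  then show ?thesis using assms by simp
qed

lemma fiber_entry:
  fixes C :: "complex mat"
  assumes C: "C \<in> carrier_mat n n" and w: "w \<in> carrier_vec (a*(n*b))"
    and x: "x < a" and i: "i < n" and y: "y < b"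
  shows "(kron (1\<^sub>m a) (kron C (1\<^sub>m b)) *\<^sub>v w) $ (x*(n*b) + (i*b+y)) = (\<Sum>k<n. C $$ (i,k) * w $ (x*(n*b) + (k*b+y)))"
proof -
  let ?M = "kron (1\<^sub>m a) (kron C (1\<^sub>m b))"
  let ?p = "x*(n*b) + (i*b+y)"
  have Mc: "?M \<in> carrier_mat (a*(n*b)) (a*(n*b))" using C by (intro kron_carrier) auto
  have ib: "i*b+y < n*b" using idx_bound[OF i y] .
  have pb: "?p < a*(n*b)" using idx_bound[OF x ib] .
  have Mpq: "?M $$ (?p, x'*(n*b) + (k*b+y')) = (if x' = x then (if y' = y then C $$ (i,k) else 0) else 0)"
    if x': "x' < a" and k: "k < n" and y': "y' < b" for x' k y'
  proof -
    have kb: "k*b+y' < n*b" using idx_bound[OF k y'] .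
    have qb: "x'*(n*b) + (k*b+y') < a*(n*b)" using idx_bound[OF x' kb] .
    have "?M $$ (?p, x'*(n*b) + (k*b+y')) = (1\<^sub>m a :: complex mat) $$ (x, x') * kron C (1\<^sub>m b) $$ (i*b+y, k*b+y')"
      using C pb qb ib kb by (subst index_kron) (auto simp: idx_div idx_mod)
    also have "kron C (1\<^sub>m b) $$ (i*b+y, k*b+y') = C $$ (i,k) * (1\<^sub>m b :: complex mat) $$ (y,y')"
      using C ib kb y y' by (subst index_kron) (auto simp: idx_div idx_mod)
    finally show ?thesis using x x' y y' by auto
  qed
  have "(?M *\<^sub>v w) $ ?p = (\<Sum>q<a*(n*b). ?M $$ (?p,q) * w $ q)" by (rule mat_vec_entry[OF Mc w pb])
  also have "\<dots> = (\<Sum>x'<a. \<Sum>z<n*b. ?M $$ (?p, x'*(n*b)+z) * w $ (x'*(n*b)+z))" by (rule sum_split_mult)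
  also have "\<dots> = (\<Sum>x'<a. \<Sum>k<n. \<Sum>y'<b. ?M $$ (?p, x'*(n*b)+(k*b+y')) * w $ (x'*(n*b)+(k*b+y')))"
    by (rule sum.cong[OF refl], rule sum_split_mult)
  also have "\<dots> = (\<Sum>x'<a. \<Sum>k<n. \<Sum>y'<b. if x' = x then (if y' = y then C $$ (i,k) * w $ (x*(n*b)+(k*b+y)) else 0) else 0)"
    by (intro sum.cong refl) (simp add: Mpq)
  also have "\<dots> = (\<Sum>x'<a. if x' = x then (\<Sum>k<n. C $$ (i,k) * w $ (x*(n*b)+(k*b+y))) else 0)"
  proof (rule sum.cong[OF refl])
    fix x' assume "x' \<in> {..<a}"
    show "(\<Sum>k<n. \<Sum>y'<b. if x' = x then (if y' = y then C $$ (i,k) * w $ (x*(n*b)+(k*b+y)) else 0) else 0)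
      = (if x' = x then (\<Sum>k<n. C $$ (i,k) * w $ (x*(n*b)+(k*b+y))) else 0)"
    proof (cases "x' = x")
      case True
      have "(\<Sum>y'<b. if y' = y then C $$ (i,k) * w $ (x*(n*b)+(k*b+y)) else 0) = C $$ (i,k) * w $ (x*(n*b)+(k*b+y))" for k
        using y by (subst sum.delta) auto
      then show ?thesis using True by simp
    qed simp
  qed
  also have "\<dots> = (\<Sum>k<n. C $$ (i,k) * w $ (x*(n*b)+(k*b+y)))"
    using x by (subst sum.delta) auto
  finally show ?thesis .
qed

lemma fiber:
  fixes C :: "complex mat"
  assumes C: "C \<in> carrier_mat n n"
    and K: "mat_kernel C = {v \<in> carrier_vec n. \<forall>i<n. i \<notin> K \<longrightarrow> v $ i = 0}"
    and w: "w \<in> carrier_vec (a*(n*b))"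
  shows "kron (1\<^sub>m a) (kron C (1\<^sub>m b)) *\<^sub>v w = 0\<^sub>v (a*(n*b)) \<longleftrightarrow> (\<forall>p<a*(n*b). p div b mod n \<notin> K \<longrightarrow> w $ p = 0)"
proof -
  let ?M = "kron (1\<^sub>m a) (kron C (1\<^sub>m b))"
  have Mc: "?M \<in> carrier_mat (a*(n*b)) (a*(n*b))" using C by (intro kron_carrier) auto
  define fib where "fib x y = vec n (\<lambda>k. w $ (x*(n*b) + (k*b+y)))" for x y
  have fibc: "fib x y \<in> carrier_vec n" for x y by (simp add: fib_def)
  have Cfib: "(C *\<^sub>v fib x y) $ i = (?M *\<^sub>v w) $ (x*(n*b) + (i*b+y))" if "x < a" "i < n" "y < b" for x i y
  proof -
    have "(C *\<^sub>v fib x y) $ i = (\<Sum>k<n. C $$ (i,k) * fib x y $ k)" by (rule mat_vec_entry[OF C fibc that(2)])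
    also have "\<dots> = (\<Sum>k<n. C $$ (i,k) * w $ (x*(n*b) + (k*b+y)))" by (intro sum.cong refl) (simp add: fib_def)
    also have "\<dots> = (?M *\<^sub>v w) $ (x*(n*b) + (i*b+y))" by (rule fiber_entry[OF C w that, symmetric])
    finally show ?thesis .
  qed
  show ?thesis
  proof
    assume M0: "?M *\<^sub>v w = 0\<^sub>v (a*(n*b))"
    show "\<forall>p<a*(n*b). p div b mod n \<notin> K \<longrightarrow> w $ p = 0"
    proof (intro allI impI)
      fix p assume p: "p < a*(n*b)" and nK: "p div b mod n \<notin> K"
      note d = decomp3[OF p]
      let ?x = "p div (n*b)" and ?i = "p div b mod n" and ?y = "p mod b"
      have "C *\<^sub>v fib ?x ?y = 0\<^sub>v n"
      proof (rule eq_vecI)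
        fix i' assume "i' < dim_vec (0\<^sub>v n :: complex vec)"
        then have i': "i' < n" by simp
        have "(C *\<^sub>v fib ?x ?y) $ i' = (?M *\<^sub>v w) $ (?x*(n*b) + (i'*b+?y))" by (rule Cfib[OF d(2) i' d(4)])
        also have "\<dots> = 0" using M0 idx_bound[OF d(2) idx_bound[OF i' d(4)]] by simp
        finally show "(C *\<^sub>v fib ?x ?y) $ i' = 0\<^sub>v n $ i'" using i' by simp
      qed (use C in simp)
      then have "fib ?x ?y \<in> mat_kernel C" using C fibc by (intro mat_kernelI) auto
      then have "fib ?x ?y $ ?i = 0" using K nK d(3) by auto
      then show "w $ p = 0" using d(1) d(3) by (simp add: fib_def)
    qed
  next
    assume Z: "\<forall>p<a*(n*b). p div b mod n \<notin> K \<longrightarrow> w $ p = 0"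
    show "?M *\<^sub>v w = 0\<^sub>v (a*(n*b))"
    proof (rule eq_vecI)
      fix p assume "p < dim_vec (0\<^sub>v (a*(n*b)) :: complex vec)"
      then have p: "p < a*(n*b)" by simp
      note d = decomp3[OF p]
      let ?x = "p div (n*b)" and ?i = "p div b mod n" and ?y = "p mod b"
      have "fib ?x ?y \<in> mat_kernel C"
      proof -
        have "\<forall>k<n. k \<notin> K \<longrightarrow> fib ?x ?y $ k = 0"
        proof (intro allI impI)
          fix k assume k: "k < n" and kK: "k \<notin> K"
          have q: "?x*(n*b) + (k*b+?y) < a*(n*b)" using idx_bound[OF d(2) idx_bound[OF k d(4)]] .
          have "(?x*(n*b) + (k*b+?y)) div b mod n = k" by (rule idx3_dig[OF k d(4)])
          then have "w $ (?x*(n*b) + (k*b+?y)) = 0" using Z q kK by auto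
          then show "fib ?x ?y $ k = 0" using k by (simp add: fib_def)
        qed
        then show ?thesis using K fibc by auto
      qed
      then have "C *\<^sub>v fib ?x ?y = 0\<^sub>v n" using mat_kernelD[OF C] by blast
      then have "(C *\<^sub>v fib ?x ?y) $ ?i = 0" using d(3) by simp
      then have "(?M *\<^sub>v w) $ (?x*(n*b) + (?i*b+?y)) = 0" using Cfib[OF d(2) d(3) d(4)] by simp
      then show "(?M *\<^sub>v w) $ p = 0\<^sub>v (a*(n*b)) $ p" using d(1) p by simp
    qed (use C in simp)
  qed
qed


lemma count_digits:
  fixes n :: "nat \<Rightarrow> nat" and K :: "nat \<Rightarrow> nat set"
  assumes Ksub: "\<And>mu. K mu \<subseteq> {..<n mu}"
  shows "card {p. p < prod n {..<D} * r \<and> (\<forall>mu<D. p div (prod n {..<mu} * r) mod n mu \<in> K mu)}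
         = r * (\<Prod>mu<D. card (K mu))"
proof (induction D)
  case 0 then show ?case by simp
next
  case (Suc D)
  let ?M = "prod n {..<D} * r"
  let ?R = "\<lambda>q. \<forall>mu<D. q div (prod n {..<mu} * r) mod n mu \<in> K mu"
  have eqset: "{p. p < prod n {..<Suc D} * r \<and> (\<forall>mu<Suc D. p div (prod n {..<mu} * r) mod n mu \<in> K mu)}
      = {p. p < n D * ?M \<and> p div ?M \<in> K D \<and> ?R (p mod ?M)}"
  proof (intro Collect_cong)
    fix p
    have PS: "prod n {..<Suc D} * r = n D * ?M" by (simp add: mult_ac)
    show "(p < prod n {..<Suc D} * r \<and> (\<forall>mu<Suc D. p div (prod n {..<mu} * r) mod n mu \<in> K mu))
        = (p < n D * ?M \<and> p div ?M \<in> K D \<and> ?R (p mod ?M))"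
    proof (cases "p < n D * ?M")
      case False then show ?thesis by (simp only: PS) simp
    next
      case True
      have dD: "p div ?M mod n D = p div ?M"
      proof -
        have "0 < n D * ?M" using True by linarith
        then have "?M > 0" by simp
        then have "p div ?M < n D" using True by (simp add: less_mult_imp_div_less mult.commute)
        then show ?thesis by simp
      qed
      have dmu: "(p mod ?M) div (prod n {..<mu} * r) mod n mu = p div (prod n {..<mu} * r) mod n mu" if mu: "mu < D" for mu
      proof -
        have split: "prod n {..<D} = prod n {..<mu} * prod n {mu..<D}"
        proof -
          have "prod n {0..<mu} * prod n {mu..<D} = prod n {0..<D}" using mu by (intro prod.atLeastLessThan_concat) auto
          then show ?thesis by (simp add: atLeast0LessThan)
        qed
        have M: "?M = prod n {mu..<D} * (prod n {..<mu} * r)" unfolding split by (simp add: mult_ac)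
        have dv: "n mu dvd prod n {mu..<D}" using mu by (intro dvd_prodI) auto
        have "(p mod ?M) div (prod n {..<mu} * r) = p div (prod n {..<mu} * r) mod prod n {mu..<D}"
          unfolding M by (rule mod_mult_div)
        then show ?thesis using dv by (simp add: mod_mod_cancel)
      qed
      have "(\<forall>mu<Suc D. p div (prod n {..<mu} * r) mod n mu \<in> K mu) = (p div ?M \<in> K D \<and> ?R (p mod ?M))"
        using dD dmu by (auto simp: less_Suc_eq)
      then show ?thesis using True by (simp only: PS)
    qed
  qed
  have "card {p. p < n D * ?M \<and> p div ?M \<in> K D \<and> ?R (p mod ?M)} = card {d. d < n D \<and> d \<in> K D} * card {q. q < ?M \<and> ?R q}"
    by (rule card_split)
  moreover have "{d. d < n D \<and> d \<in> K D} = K D" using Ksub[of D] by auto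
  ultimately show ?case using Suc eqset by (simp add: mult_ac)
qed

lemma card_Kf: "card (Kf G) = (case G of Cycle n \<Rightarrow> if even n then 2 else 1 | Path n \<Rightarrow> if even n then 0 else 1)"
  by (cases G) (auto simp: Kf_def)

lemma prod_Kf: "(\<Prod>mu<length Gs. card (Kf (Gs ! mu))) = (if has_even_path Gs then 0 else 2 ^ c_even Gs)"
proof (cases "has_even_path Gs")
  case True
  then obtain n where "Path n \<in> set Gs" "even n" unfolding has_even_path_def by auto
  then obtain mu where mu: "mu < length Gs" "Gs ! mu = Path n" by (metis in_set_conv_nth)
  then have "\<exists>mu\<in>{..<length Gs}. card (Kf (Gs ! mu)) = 0" using \<open>even n\<close> by (intro bexI[of _ mu]) (auto simp: card_Kf)
  then show ?thesis using True by simp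
next
  case False
  let ?P = "\<lambda>G. \<exists>n. G = Cycle n \<and> even n"
  have "card (Kf (Gs ! mu)) = (if ?P (Gs ! mu) then 2 else 1)" if mu: "mu < length Gs" for mu
  proof (cases "Gs ! mu")
    case (Cycle n) then show ?thesis by (simp add: card_Kf)
  next
    case (Path n)
    then have "Path n \<in> set Gs" using mu by (metis nth_mem)
    then have "odd n" using False unfolding has_even_path_def by auto
    then show ?thesis using Path by (simp add: card_Kf)
  qed
  then have "(\<Prod>mu<length Gs. card (Kf (Gs ! mu))) = (\<Prod>mu<length Gs. (if ?P (Gs ! mu) then 2 else 1))"
    by (intro prod.cong refl) auto
  also have "\<dots> = 2 ^ card {mu \<in> {..<length Gs}. ?P (Gs ! mu)}"
    by (simp add: prod.If_cases Int_def)
  also have "card {mu \<in> {..<length Gs}. ?P (Gs ! mu)} = c_even Gs"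
    unfolding c_even_def by (simp add: length_filter_conv_card lessThan_def)
  finally show ?thesis using False by simp
qed


lemma PL: "prod_list (map f (rev [a..<b])) = prod f {a..<(b::nat)}"
proof -
  have "prod_list (map f (rev [a..<b])) = prod_list (map f [a..<b])" by (simp add: rev_map[symmetric] prod_list.rev)
  also have "\<dots> = prod f (set [a..<b])" by (rule prod.distinct_set_conv_list[symmetric]) simp
  finally show ?thesis by simp
qed

lemma NN_prod: "NN Gs = prod (\<lambda>nu. nverts (Gs ! nu)) {..<length Gs}"
  using NN_alt[of Gs] PL[of "\<lambda>nu. nverts (Gs ! nu)" 0 "length Gs"] by (simp add: atLeast0LessThan)

lemma Fk_car: "(\<And>nu. h nu \<in> carrier_mat (nverts (Gs!nu)) (nverts (Gs!nu))) \<Longrightarrow>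
  Fk (map h (rev [0..<length Gs])) \<in> carrier_mat (NN Gs) (NN Gs)"
  using F_carrier[of "rev [0..<length Gs]" h "\<lambda>nu. nverts (Gs!nu)"] NN_alt[of Gs] by simp

lemma Fk_mult': fixes h g :: "nat \<Rightarrow> complex mat" shows "(\<And>nu. h nu \<in> carrier_mat (nverts (Gs!nu)) (nverts (Gs!nu))) \<Longrightarrow>
  (\<And>nu. g nu \<in> carrier_mat (nverts (Gs!nu)) (nverts (Gs!nu))) \<Longrightarrow>
  Fk (map h (rev [0..<length Gs])) * Fk (map g (rev [0..<length Gs])) = Fk (map (\<lambda>nu. h nu * g nu) (rev [0..<length Gs]))"
  using F_mult[of "rev [0..<length Gs]" h "\<lambda>nu. nverts (Gs!nu)" g] by blast

lemma Fk_one': "Fk (map (\<lambda>nu. 1\<^sub>m (nverts (Gs!nu))) (rev [0..<length Gs])) = (1\<^sub>m (NN Gs) :: complex mat)"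
  using F_one[of "\<lambda>nu. nverts (Gs!nu)" "rev [0..<length Gs]"] NN_alt[of Gs] by simp

definition Sg :: "factor list \<Rightarrow> nat \<Rightarrow> complex mat" where
  "Sg Gs r = kron (Fk (map (\<lambda>nu. Sf (Gs!nu)) (rev [0..<length Gs]))) (1\<^sub>m r)"
definition Tg :: "factor list \<Rightarrow> nat \<Rightarrow> complex mat" where
  "Tg Gs r = kron (Fk (map (\<lambda>nu. Tf (Gs!nu)) (rev [0..<length Gs]))) (1\<^sub>m r)"
definition Pm :: "factor list \<Rightarrow> nat \<Rightarrow> nat \<Rightarrow> complex mat" where
  "Pm Gs r mu = kron (Fk (map (\<lambda>nu. if nu = mu then 1\<^sub>m (nverts (Gs!nu)) else Tf (Gs!nu)) (rev [0..<length Gs]))) (1\<^sub>m r)"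
definition Qm :: "factor list \<Rightarrow> nat \<Rightarrow> nat \<Rightarrow> complex mat" where
  "Qm Gs r mu = kron (Fk (map (\<lambda>nu. if nu = mu then 1\<^sub>m (nverts (Gs!nu)) else Sf (Gs!nu)) (rev [0..<length Gs]))) (1\<^sub>m r)"
definition zf :: "factor list \<Rightarrow> nat \<Rightarrow> nat \<Rightarrow> complex mat" where
  "zf Gs mu nu = (if nu = mu then A_as (Gs!nu) * Sf (Gs!nu) else 1\<^sub>m (nverts (Gs!nu)))"
definition Zm :: "factor list \<Rightarrow> nat \<Rightarrow> nat \<Rightarrow> complex mat" where
  "Zm Gs r mu = kron (Fk (map (zf Gs mu) (rev [0..<length Gs]))) (1\<^sub>m r)"

lemma zf_carrier: "zf Gs mu nu \<in> carrier_mat (nverts (Gs!nu)) (nverts (Gs!nu))"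
  unfolding zf_def using mult_carrier_mat[OF A_as_carrier Sf_carrier] by auto

lemma Sg_carrier: "Sg Gs r \<in> carrier_mat (NN Gs * r) (NN Gs * r)"
  unfolding Sg_def by (intro kron_carrier Fk_car) auto
lemma Tg_carrier: "Tg Gs r \<in> carrier_mat (NN Gs * r) (NN Gs * r)"
  unfolding Tg_def by (intro kron_carrier Fk_car) auto
lemma Pm_carrier: "Pm Gs r mu \<in> carrier_mat (NN Gs * r) (NN Gs * r)"
  unfolding Pm_def by (intro kron_carrier Fk_car) auto
lemma Qm_carrier: "Qm Gs r mu \<in> carrier_mat (NN Gs * r) (NN Gs * r)"
  unfolding Qm_def by (intro kron_carrier Fk_car) auto
lemma Zm_carrier: "Zm Gs r mu \<in> carrier_mat (NN Gs * r) (NN Gs * r)"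
  unfolding Zm_def by (intro kron_carrier Fk_car zf_carrier) auto

lemma SgTg: "Sg Gs r * Tg Gs r = 1\<^sub>m (NN Gs * r)"
proof -
  have A: "Sg Gs r * Tg Gs r = kron (Fk (map (\<lambda>nu. Sf (Gs!nu)) (rev [0..<length Gs])) * Fk (map (\<lambda>nu. Tf (Gs!nu)) (rev [0..<length Gs]))) (1\<^sub>m r * 1\<^sub>m r)"
    unfolding Sg_def Tg_def by (rule kron_mult[OF Fk_car one_carrier_mat Fk_car one_carrier_mat]) auto
  have B: "Fk (map (\<lambda>nu. Sf (Gs!nu)) (rev [0..<length Gs])) * Fk (map (\<lambda>nu. Tf (Gs!nu)) (rev [0..<length Gs]))
      = Fk (map (\<lambda>nu. Sf (Gs!nu) * Tf (Gs!nu)) (rev [0..<length Gs]))" by (rule Fk_mult') auto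
  have C: "map (\<lambda>nu. Sf (Gs!nu) * Tf (Gs!nu)) (rev [0..<length Gs]) = map (\<lambda>nu. 1\<^sub>m (nverts (Gs!nu))) (rev [0..<length Gs])"
    by (simp add: ST)
  have "Sg Gs r * Tg Gs r = kron (1\<^sub>m (NN Gs)) (1\<^sub>m r)" unfolding A B C Fk_one' by simp
  then show ?thesis by (simp add: kron_one_one)
qed

lemma QmPm: "Qm Gs r mu * Pm Gs r mu = 1\<^sub>m (NN Gs * r)"
proof -
  let ?q = "\<lambda>nu. if nu = mu then 1\<^sub>m (nverts (Gs!nu)) else Sf (Gs!nu)"
  let ?p = "\<lambda>nu. if nu = mu then 1\<^sub>m (nverts (Gs!nu)) else Tf (Gs!nu)"
  have qc: "?q nu \<in> carrier_mat (nverts (Gs!nu)) (nverts (Gs!nu))" for nu by auto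
  have pc: "?p nu \<in> carrier_mat (nverts (Gs!nu)) (nverts (Gs!nu))" for nu by auto
  have A: "Qm Gs r mu * Pm Gs r mu = kron (Fk (map ?q (rev [0..<length Gs])) * Fk (map ?p (rev [0..<length Gs]))) (1\<^sub>m r * 1\<^sub>m r)"
    unfolding Qm_def Pm_def by (rule kron_mult[OF Fk_car one_carrier_mat Fk_car one_carrier_mat]) (use qc pc in auto)
  have B: "Fk (map ?q (rev [0..<length Gs])) * Fk (map ?p (rev [0..<length Gs])) = Fk (map (\<lambda>nu. ?q nu * ?p nu) (rev [0..<length Gs]))"
    by (rule Fk_mult') (use qc pc in auto)
  have C: "map (\<lambda>nu. ?q nu * ?p nu) (rev [0..<length Gs]) = map (\<lambda>nu. 1\<^sub>m (nverts (Gs!nu))) (rev [0..<length Gs])"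
    by (intro map_cong refl) (simp add: ST)
  have "Qm Gs r mu * Pm Gs r mu = kron (1\<^sub>m (NN Gs)) (1\<^sub>m r)" unfolding A B C Fk_one' by simp
  then show ?thesis by (simp add: kron_one_one)
qed

lemma PYS: "Pm Gs r mu * Ym Gs r mu * Sg Gs r = Zm Gs r mu"
proof -
  let ?p = "\<lambda>nu. if nu = mu then 1\<^sub>m (nverts (Gs!nu)) else Tf (Gs!nu)"
  have pc: "?p nu \<in> carrier_mat (nverts (Gs!nu)) (nverts (Gs!nu))" for nu by auto
  have fc: "fm Gs mu nu \<in> carrier_mat (nverts (Gs!nu)) (nverts (Gs!nu))" for nu by (rule fm_carrier)
  have pfc: "?p nu * fm Gs mu nu \<in> carrier_mat (nverts (Gs!nu)) (nverts (Gs!nu))" for nu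
    by (rule mult_carrier_mat[OF pc fc])
  have "Pm Gs r mu * Ym Gs r mu = kron (Fk (map ?p (rev [0..<length Gs])) * Bm Gs mu) (1\<^sub>m r * 1\<^sub>m r)"
    unfolding Pm_def Ym_def by (rule kron_mult[OF Fk_car one_carrier_mat Bm_carrier one_carrier_mat]) (use pc in auto)
  also have "Fk (map ?p (rev [0..<length Gs])) * Bm Gs mu = Fk (map (\<lambda>nu. ?p nu * fm Gs mu nu) (rev [0..<length Gs]))"
    unfolding Bm_def by (rule Fk_mult') (use pc fc in auto)
  finally have e1: "Pm Gs r mu * Ym Gs r mu = kron (Fk (map (\<lambda>nu. ?p nu * fm Gs mu nu) (rev [0..<length Gs]))) (1\<^sub>m r)" by simp
  have "Pm Gs r mu * Ym Gs r mu * Sg Gs r = kron (Fk (map (\<lambda>nu. ?p nu * fm Gs mu nu) (rev [0..<length Gs])) * Fk (map (\<lambda>nu. Sf (Gs!nu)) (rev [0..<length Gs]))) (1\<^sub>m r * 1\<^sub>m r)"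
    unfolding e1 Sg_def by (rule kron_mult[OF Fk_car one_carrier_mat Fk_car one_carrier_mat]) (use pfc in auto)
  also have "Fk (map (\<lambda>nu. ?p nu * fm Gs mu nu) (rev [0..<length Gs])) * Fk (map (\<lambda>nu. Sf (Gs!nu)) (rev [0..<length Gs]))
     = Fk (map (\<lambda>nu. ?p nu * fm Gs mu nu * Sf (Gs!nu)) (rev [0..<length Gs]))"
    by (rule Fk_mult') (use pfc in auto)
  also have "map (\<lambda>nu. ?p nu * fm Gs mu nu * Sf (Gs!nu)) (rev [0..<length Gs]) = map (zf Gs mu) (rev [0..<length Gs])"
  proof (intro map_cong refl)
    fix nu
    show "?p nu * fm Gs mu nu * Sf (Gs!nu) = zf Gs mu nu"
    proof (cases "nu = mu")
      case True then show ?thesis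
        by (simp add: zf_def fm_def left_mult_one_mat[OF A_as_carrier])
    next
      case False then show ?thesis
        by (simp add: zf_def fm_def right_mult_one_mat[OF Tf_carrier] ST)
    qed
  qed
  finally show ?thesis unfolding Zm_def by simp
qed


lemma upt_split3: "mu < D \<Longrightarrow> rev [0..<D] = rev [Suc mu..<D] @ mu # rev [0..<mu]"
proof -
  assume mu: "mu < D"
  have "[0..<D] = [0..<mu] @ [mu..<D]" using upt_add_eq_append[of 0 mu "D - mu"] mu by simp
  also have "[mu..<D] = mu # [Suc mu..<D]" using mu by (rule upt_conv_Cons)
  finally show ?thesis by simp
qed

lemma NN_split: assumes mu: "mu < length Gs"
  shows "prod (\<lambda>nu. nverts (Gs!nu)) {Suc mu..<length Gs} * (nverts (Gs!mu) * (prod (\<lambda>nu. nverts (Gs!nu)) {..<mu} * r)) = NN Gs * r"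
proof -
  let ?n = "\<lambda>nu. nverts (Gs!nu)"
  have "prod ?n {0..<mu} * prod ?n {mu..<length Gs} = prod ?n {0..<length Gs}"
    using mu by (intro prod.atLeastLessThan_concat) auto
  moreover have "prod ?n {mu..<length Gs} = ?n mu * prod ?n {Suc mu..<length Gs}"
    using mu by (rule prod.atLeast_Suc_lessThan)
  ultimately show ?thesis unfolding NN_prod by (simp add: atLeast0LessThan mult_ac)
qed

lemma Zm_split: assumes mu: "mu < length Gs"
  shows "Zm Gs r mu = kron (1\<^sub>m (prod (\<lambda>nu. nverts (Gs!nu)) {Suc mu..<length Gs}))
            (kron (A_as (Gs!mu) * Sf (Gs!mu)) (1\<^sub>m (prod (\<lambda>nu. nverts (Gs!nu)) {..<mu} * r)))"
proof -
  let ?n = "\<lambda>nu. nverts (Gs!nu)"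
  let ?h = "zf Gs mu"
  let ?xs = "rev [Suc mu..<length Gs]" and ?ys = "rev [0..<mu]"
  let ?C = "A_as (Gs!mu) * Sf (Gs!mu)"
  have hc: "?h nu \<in> carrier_mat (?n nu) (?n nu)" for nu by (rule zf_carrier)
  have Cc: "?C \<in> carrier_mat (?n mu) (?n mu)" using mult_carrier_mat[OF A_as_carrier Sf_carrier] by simp
  have "Fk (map ?h (rev [0..<length Gs])) = Fk (map ?h (?xs @ (mu # ?ys)))" using upt_split3[OF mu] by simp
  also have "\<dots> = kron (Fk (map ?h ?xs)) (Fk (map ?h (mu # ?ys)))"
    by (rule F_append[of _ _ _ ?n]) (rule hc)
  also have "Fk (map ?h (mu # ?ys)) = kron ?C (Fk (map ?h ?ys))" by (simp add: zf_def)
  also have "Fk (map ?h ?xs) = Fk (map (\<lambda>nu. 1\<^sub>m (?n nu)) ?xs)"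
    by (intro arg_cong[where f=Fk] map_cong refl) (auto simp: zf_def)
  also have "\<dots> = 1\<^sub>m (prod_list (map ?n ?xs))" by (rule F_one)
  also have "prod_list (map ?n ?xs) = prod ?n {Suc mu..<length Gs}" by (rule PL)
  also have "Fk (map ?h ?ys) = Fk (map (\<lambda>nu. 1\<^sub>m (?n nu)) ?ys)"
    by (intro arg_cong[where f=Fk] map_cong refl) (auto simp: zf_def)
  also have "\<dots> = 1\<^sub>m (prod_list (map ?n ?ys))" by (rule F_one)
  also have "prod_list (map ?n ?ys) = prod ?n {..<mu}" using PL[of ?n 0 mu] by (simp add: atLeast0LessThan)
  finally have F: "Fk (map ?h (rev [0..<length Gs])) = kron (1\<^sub>m (prod ?n {Suc mu..<length Gs})) (kron ?C (1\<^sub>m (prod ?n {..<mu})))" .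
  have "Zm Gs r mu = kron (kron (1\<^sub>m (prod ?n {Suc mu..<length Gs})) (kron ?C (1\<^sub>m (prod ?n {..<mu})))) (1\<^sub>m r)"
    unfolding Zm_def F ..
  also have "\<dots> = kron (1\<^sub>m (prod ?n {Suc mu..<length Gs})) (kron (kron ?C (1\<^sub>m (prod ?n {..<mu}))) (1\<^sub>m r))"
    by (rule kron_assoc[OF one_carrier_mat kron_carrier[OF Cc one_carrier_mat] one_carrier_mat])
  also have "kron (kron ?C (1\<^sub>m (prod ?n {..<mu}))) (1\<^sub>m r) = kron ?C (kron (1\<^sub>m (prod ?n {..<mu})) (1\<^sub>m r))"
    by (rule kron_assoc[OF Cc one_carrier_mat one_carrier_mat])
  also have "kron (1\<^sub>m (prod ?n {..<mu})) (1\<^sub>m r) = (1\<^sub>m (prod ?n {..<mu} * r) :: complex mat)"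
    by (rule kron_one_one)
  finally show ?thesis .
qed

lemma Zm_ker: assumes valid: "\<forall>G\<in>set Gs. valid_factor G" and mu: "mu < length Gs"
  and w: "w \<in> carrier_vec (NN Gs * r)"
  shows "Zm Gs r mu *\<^sub>v w = 0\<^sub>v (NN Gs * r) \<longleftrightarrow>
    (\<forall>p<NN Gs * r. p div (prod (\<lambda>nu. nverts (Gs!nu)) {..<mu} * r) mod nverts (Gs!mu) \<notin> Kf (Gs!mu) \<longrightarrow> w $ p = 0)"
proof -
  let ?n = "\<lambda>nu. nverts (Gs!nu)"
  let ?C = "A_as (Gs!mu) * Sf (Gs!mu)"
  have Cc: "?C \<in> carrier_mat (?n mu) (?n mu)" using mult_carrier_mat[OF A_as_carrier Sf_carrier] by simp
  have v: "valid_factor (Gs!mu)" using valid mu by auto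
  note eq = NN_split[OF mu, of r]
  have w': "w \<in> carrier_vec (prod ?n {Suc mu..<length Gs} * (?n mu * (prod ?n {..<mu} * r)))" unfolding eq by (rule w)
  show ?thesis
    unfolding Zm_split[OF mu] using fiber[OF Cc AS_ker[OF v] w'] eq by simp
qed

context
  fixes Gs :: "factor list" and gam :: "nat \<Rightarrow> complex mat" and r :: nat
  assumes valid: "\<forall>G\<in>set Gs. valid_factor G"
    and gc: "\<forall>mu < length Gs. gam mu \<in> carrier_mat r r"
    and cliff: "\<forall>mu < length Gs. \<forall>nu < length Gs.
           gam mu * gam nu + gam nu * gam mu = (if mu = nu then 2 else 0) \<cdot>\<^sub>m 1\<^sub>m r"
begin

lemma kerDS: "mat_kernel (dirac Gs gam r * Sg Gs r) =
  {w \<in> carrier_vec (NN Gs * r). \<forall>p<NN Gs * r.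
      p \<notin> {p. \<forall>mu<length Gs. p div (prod (\<lambda>nu. nverts (Gs!nu)) {..<mu} * r) mod nverts (Gs!mu) \<in> Kf (Gs!mu)} \<longrightarrow> w $ p = 0}"
proof -
  let ?m = "NN Gs * r" and ?Dm = "dirac Gs gam r" and ?S = "Sg Gs r"
  have Dc: "?Dm \<in> carrier_mat ?m ?m" using dirac_carrier gc by blast
  have DSc: "?Dm * ?S \<in> carrier_mat ?m ?m" using mult_carrier_mat[OF Dc Sg_carrier] .
  have E1: "w \<in> mat_kernel (?Dm * ?S) \<longleftrightarrow> w \<in> carrier_vec ?m \<and> (\<forall>mu<length Gs. Zm Gs r mu *\<^sub>v w = 0\<^sub>v ?m)" for w
  proof (cases "w \<in> carrier_vec ?m")
    case False then show ?thesis using mat_kernel_carrier[OF DSc] by auto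
  next
    case w: True
    have Sw: "?S *\<^sub>v w \<in> carrier_vec ?m" using mult_mat_vec_carrier[OF Sg_carrier w] .
    have "w \<in> mat_kernel (?Dm * ?S) \<longleftrightarrow> ?Dm *\<^sub>v (?S *\<^sub>v w) = 0\<^sub>v ?m"
      using w DSc assoc_mult_mat_vec[OF Dc Sg_carrier w] Dc by (simp add: mat_kernel_def carrier_matD[OF Dc] carrier_matD[OF Sg_carrier])
    also have "\<dots> \<longleftrightarrow> ?S *\<^sub>v w \<in> mat_kernel ?Dm"
      using Sw Dc by (simp add: mat_kernel_def carrier_matD[OF Dc])
    also have "\<dots> \<longleftrightarrow> (\<forall>mu<length Gs. Ym Gs r mu *\<^sub>v (?S *\<^sub>v w) = 0\<^sub>v ?m)"
      using ker_dirac[OF valid gc cliff] Sw by simp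
    also have "\<dots> \<longleftrightarrow> (\<forall>mu<length Gs. Zm Gs r mu *\<^sub>v w = 0\<^sub>v ?m)"
    proof -
      have "Ym Gs r mu *\<^sub>v (?S *\<^sub>v w) = 0\<^sub>v ?m \<longleftrightarrow> Zm Gs r mu *\<^sub>v w = 0\<^sub>v ?m" for mu
      proof -
        let ?x = "Ym Gs r mu *\<^sub>v (?S *\<^sub>v w)"
        have xc: "?x \<in> carrier_vec ?m" using mult_mat_vec_carrier[OF Ym_carrier Sw] .
        have "Zm Gs r mu *\<^sub>v w = (Pm Gs r mu * Ym Gs r mu * ?S) *\<^sub>v w" by (simp add: PYS)
        also have "\<dots> = (Pm Gs r mu * Ym Gs r mu) *\<^sub>v (?S *\<^sub>v w)"
          by (rule assoc_mult_mat_vec[OF mult_carrier_mat[OF Pm_carrier Ym_carrier] Sg_carrier w])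
        also have "\<dots> = Pm Gs r mu *\<^sub>v ?x"
          by (rule assoc_mult_mat_vec[OF Pm_carrier Ym_carrier Sw])
        finally have Z: "Zm Gs r mu *\<^sub>v w = Pm Gs r mu *\<^sub>v ?x" .
        have "?x = 0\<^sub>v ?m \<longleftrightarrow> Pm Gs r mu *\<^sub>v ?x = 0\<^sub>v ?m"
        proof
          assume "?x = 0\<^sub>v ?m" then show "Pm Gs r mu *\<^sub>v ?x = 0\<^sub>v ?m" using mult_zero_vec[OF Pm_carrier] by simp
        next
          assume P0: "Pm Gs r mu *\<^sub>v ?x = 0\<^sub>v ?m"
          have "?x = (Qm Gs r mu * Pm Gs r mu) *\<^sub>v ?x" using QmPm xc by simp
          also have "\<dots> = Qm Gs r mu *\<^sub>v (Pm Gs r mu *\<^sub>v ?x)" by (rule assoc_mult_mat_vec[OF Qm_carrier Pm_carrier xc])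
          also have "\<dots> = 0\<^sub>v ?m" unfolding P0 by (rule mult_zero_vec[OF Qm_carrier])
          finally show "?x = 0\<^sub>v ?m" .
        qed
        then show ?thesis using Z by simp
      qed
      then show ?thesis by simp
    qed
    finally show ?thesis using w by simp
  qed
  have E2: "(\<forall>mu<length Gs. Zm Gs r mu *\<^sub>v w = 0\<^sub>v ?m) \<longleftrightarrow>
     (\<forall>p<?m. p \<notin> {p. \<forall>mu<length Gs. p div (prod (\<lambda>nu. nverts (Gs!nu)) {..<mu} * r) mod nverts (Gs!mu) \<in> Kf (Gs!mu)} \<longrightarrow> w $ p = 0)"
    if w: "w \<in> carrier_vec ?m" for w
  proof -
    have "(\<forall>mu<length Gs. Zm Gs r mu *\<^sub>v w = 0\<^sub>v ?m) \<longleftrightarrow>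
      (\<forall>mu<length Gs. \<forall>p<?m. p div (prod (\<lambda>nu. nverts (Gs!nu)) {..<mu} * r) mod nverts (Gs!mu) \<notin> Kf (Gs!mu) \<longrightarrow> w $ p = 0)"
      using Zm_ker[OF valid _ w] by blast
    also have "\<dots> \<longleftrightarrow> (\<forall>p<?m. p \<notin> {p. \<forall>mu<length Gs. p div (prod (\<lambda>nu. nverts (Gs!nu)) {..<mu} * r) mod nverts (Gs!mu) \<in> Kf (Gs!mu)} \<longrightarrow> w $ p = 0)"
      by blast
    finally show ?thesis .
  qed
  show ?thesis
  proof (rule Set.set_eqI)
    fix w
    show "w \<in> mat_kernel (?Dm * ?S) \<longleftrightarrow> w \<in> {w \<in> carrier_vec ?m. \<forall>p<?m.
      p \<notin> {p. \<forall>mu<length Gs. p div (prod (\<lambda>nu. nverts (Gs!nu)) {..<mu} * r) mod nverts (Gs!mu) \<in> Kf (Gs!mu)} \<longrightarrow> w $ p = 0}"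
      unfolding mem_Collect_eq[of w] using E1[of w] E2[of w] by blast
  qed
qed

lemma kernel_dim_dirac: "kernel_dim (dirac Gs gam r) = r * (\<Prod>mu<length Gs. card (Kf (Gs ! mu)))"
proof -
  let ?m = "NN Gs * r" and ?Dm = "dirac Gs gam r" and ?S = "Sg Gs r"
  let ?n = "\<lambda>nu. nverts (Gs!nu)"
  let ?J = "{p. \<forall>mu<length Gs. p div (prod ?n {..<mu} * r) mod ?n mu \<in> Kf (Gs!mu)}"
  have Dc: "?Dm \<in> carrier_mat ?m ?m" using dirac_carrier gc by blast
  have DSc: "?Dm * ?S \<in> carrier_mat ?m ?m" using mult_carrier_mat[OF Dc Sg_carrier] .
  have "kernel_dim ?Dm = kernel.dim ?m ?Dm" unfolding kernel_dim_def using Dc by simp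
  also have "\<dots> = kernel.dim ?m (?Dm * ?S)"
    by (rule mat_kernel_dim_mult_eq_right[OF Dc Sg_carrier Tg_carrier SgTg, symmetric])
  also have "\<dots> = card (?J \<inter> {..<?m})" by (rule coord_dim[OF DSc kerDS])
  also have "?J \<inter> {..<?m} = {p. p < prod ?n {..<length Gs} * r \<and>
      (\<forall>mu<length Gs. p div (prod ?n {..<mu} * r) mod ?n mu \<in> (if mu < length Gs then Kf (Gs!mu) else {}))}"
    unfolding NN_prod by auto
  also have "card \<dots> = r * (\<Prod>mu<length Gs. card (if mu < length Gs then Kf (Gs!mu) else {}))"
  proof (rule count_digits)
    fix mu show "(if mu < length Gs then Kf (Gs!mu) else {}) \<subseteq> {..<?n mu}"
      using Kf_sub valid by auto
  qed
  also have "(\<Prod>mu<length Gs. card (if mu < length Gs then Kf (Gs!mu) else {})) = (\<Prod>mu<length Gs. card (Kf (Gs ! mu)))"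
    by (intro prod.cong refl) auto
  finally show ?thesis .
qed

end


theorem mainTheorem7:
  fixes Gs :: "factor list" and gam :: "nat \<Rightarrow> complex mat" and r :: nat
  assumes "Gs \<noteq> []"
    and "\<forall>G\<in>set Gs. valid_factor G"
    and "r > 0"
    and "\<forall>mu < length Gs. gam mu \<in> carrier_mat r r"
    and "\<forall>mu < length Gs. \<forall>nu < length Gs.
           gam mu * gam nu + gam nu * gam mu = (if mu = nu then 2 else 0) \<cdot>\<^sub>m 1\<^sub>m r"
  shows "real (kernel_dim (dirac Gs gam r)) / real r =
           (if has_even_path Gs then 0 else 2 ^ c_even Gs)
       \<and> (\<not> has_even_path Gs \<longrightarrow> kernel_dim (dirac Gs gam r) \<ge> r)"
proof -
  have kd: "kernel_dim (dirac Gs gam r) = r * (if has_even_path Gs then 0 else 2 ^ c_even Gs)"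
    using kernel_dim_dirac[OF assms(2) assms(4) assms(5)] prod_Kf[of Gs] by simp
  show ?thesis
  proof (cases "has_even_path Gs")
    case True then show ?thesis using kd by simp
  next
    case False
    have "real (kernel_dim (dirac Gs gam r)) / real r = 2 ^ c_even Gs"
      using kd False assms(3) by simp
    moreover have "r \<le> r * 2 ^ c_even Gs" by simp
    ultimately show ?thesis using kd False by simp
  qed
qed


end
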